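(* Let $T_1$ and $T_2$ be disjoint trees, let $u$ be a weak support vertex of $T_1$ and $v$ a weak support vertex of $T_2$, and let $T_{uv}$ be the tree obtained from $T_1\cup T_2$ by adding the edge $uv$ and deleting the leaf neighbor of $u$ and the leaf neighbor of $v$. If both $T_1$ and $T_2$ are in Class $3$, then $T_{uv}$ is in Class $3$.
   Context: A weak support vertex is a vertex adjacent to exactly one leaf. A tree is in Class $3$ if its total domination subdivision number equals $3$, where the total domination subdivision number of a graph is the minimum number of edges that must be subdivided (each at most once) in order to increase the total domination number $\gamma_t$ (the minimum size of a vertex set $S$ such that every vertex has a neighbor in $S$). *)

theory Defs
  imports Main
begin

type_synonym 'a graph = "'a set \<times> 'a set set"

definition verts :: "'a graph \<Rightarrow> 'a set" where "verts G = fst G"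
definition edges :: "'a graph \<Rightarrow> 'a set set" where "edges G = snd G"

definition adj :: "'a graph \<Rightarrow> 'a \<Rightarrow> 'a \<Rightarrow> bool" where
  "adj G x y \<longleftrightarrow> {x, y} \<in> edges G"

definition simple_graph :: "'a graph \<Rightarrow> bool" where
  "simple_graph G \<longleftrightarrow> finite (verts G) \<and>
     (\<forall>e\<in>edges G. \<exists>x y. x \<noteq> y \<and> x \<in> verts G \<and> y \<in> verts G \<and> e = {x, y})"

definition connected_graph :: "'a graph \<Rightarrow> bool" where
  "connected_graph G \<longleftrightarrow>
     (\<forall>x\<in>verts G. \<forall>y\<in>verts G. (x, y) \<in> {(a, b). adj G a b}\<^sup>*)"

definition is_tree :: "'a graph \<Rightarrow> bool" where
  "is_tree G \<longleftrightarrow> simple_graph G \<and> verts G \<noteq> {} \<and> connected_graph G \<and>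
     card (edges G) = card (verts G) - 1"

definition degree :: "'a graph \<Rightarrow> 'a \<Rightarrow> nat" where
  "degree G x = card {y \<in> verts G. adj G x y}"

definition is_leaf :: "'a graph \<Rightarrow> 'a \<Rightarrow> bool" where
  "is_leaf G x \<longleftrightarrow> x \<in> verts G \<and> degree G x = 1"

definition weak_support :: "'a graph \<Rightarrow> 'a \<Rightarrow> bool" where
  "weak_support G x \<longleftrightarrow> x \<in> verts G \<and> card {y \<in> verts G. adj G x y \<and> is_leaf G y} = 1"

definition total_dominating :: "'a graph \<Rightarrow> 'a set \<Rightarrow> bool" where
  "total_dominating G S \<longleftrightarrow> S \<subseteq> verts G \<and> (\<forall>v\<in>verts G. \<exists>u\<in>S. adj G v u)"

definition gamma_t :: "'a graph \<Rightarrow> nat" where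
  "gamma_t G = Min (card ` {S. total_dominating G S})"

(* subdivide each edge of F once; the new vertex on edge e is Inr e *)
definition subdivide :: "'a graph \<Rightarrow> 'a set set \<Rightarrow> ('a + 'a set) graph" where
  "subdivide G F =
    (Inl ` verts G \<union> Inr ` F,
     {Inl ` e | e. e \<in> edges G - F} \<union>
     {{Inl x, Inr e} | x e. e \<in> F \<and> x \<in> e})"

definition increases_gamma_t :: "'a graph \<Rightarrow> 'a set set \<Rightarrow> bool" where
  "increases_gamma_t G F \<longleftrightarrow> F \<subseteq> edges G \<and> gamma_t (subdivide G F) > gamma_t G"

definition sd_gamma_t :: "'a graph \<Rightarrow> nat" where
  "sd_gamma_t G = (LEAST k. \<exists>F. increases_gamma_t G F \<and> card F = k)"

definition class3 :: "'a graph \<Rightarrow> bool" where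
  "class3 G \<longleftrightarrow> (\<exists>F. increases_gamma_t G F) \<and> sd_gamma_t G = 3"

definition join_trees :: "'a graph \<Rightarrow> 'a graph \<Rightarrow> 'a \<Rightarrow> 'a \<Rightarrow> 'a \<Rightarrow> 'a \<Rightarrow> 'a graph" where
  "join_trees T1 T2 u u' v v' =
    ((verts T1 \<union> verts T2) - {u', v'},
     {e \<in> edges T1 \<union> edges T2 \<union> {{u, v}}. u' \<notin> e \<and> v' \<notin> e})"

end

theory Submission
  imports Defs
begin

lemma adj_sym: "adj G x y = adj G y x"
  by (simp add: adj_def insert_commute)

lemma Inl_img_eq_pair: "(Inl ` e = {Inl a, Inl b}) \<longleftrightarrow> e = {a, b}"
proof
  assume h: "Inl ` e = {Inl a, Inl b}"
  show "e = {a, b}"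
  proof (rule set_eqI)
    fix x show "x \<in> e \<longleftrightarrow> x \<in> {a, b}"
      using arg_cong[OF h, of "\<lambda>X. Inl x \<in> X"] by auto
  qed
qed simp

lemma verts_subdivide: "verts (subdivide G F) = Inl ` verts G \<union> Inr ` F"
  by (simp add: subdivide_def verts_def)

lemma adj_sub_LL: "adj (subdivide G F) (Inl a) (Inl b) \<longleftrightarrow> {a, b} \<in> edges G - F"
proof -
  have "{Inl a, Inl b} \<noteq> {Inl x, Inr e}" for x :: 'a and e :: "'a set"
    by (auto simp: doubleton_eq_iff)
  moreover have "({Inl a, Inl b} = Inl ` e) \<longleftrightarrow> e = {a,b}" for e
    using Inl_img_eq_pair[of e a b] by auto
  ultimately show ?thesis
    unfolding adj_def edges_def subdivide_def snd_conv
    by (smt (verit, ccfv_threshold) Diff_iff Un_iff mem_Collect_eq)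
qed

lemma adj_sub_LR: "adj (subdivide G F) (Inl a) (Inr e) \<longleftrightarrow> e \<in> F \<and> a \<in> e"
proof -
  have "Inl ` e' \<noteq> {Inl a, Inr e}" for e' by auto
  then show ?thesis
    by (auto simp: adj_def edges_def subdivide_def doubleton_eq_iff)
qed

lemma adj_sub_RL: "adj (subdivide G F) (Inr e) (Inl a) \<longleftrightarrow> e \<in> F \<and> a \<in> e"
  using adj_sub_LR adj_sym by metis

lemma adj_sub_RR: "\<not> adj (subdivide G F) (Inr e) (Inr e')"
  by (auto simp: adj_def edges_def subdivide_def doubleton_eq_iff)

lemmas adj_sub = adj_sub_LL adj_sub_LR adj_sub_RL adj_sub_RR


definition dom_by :: "'b graph \<Rightarrow> 'b set \<Rightarrow> 'b set \<Rightarrow> bool" where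
  "dom_by G S X \<longleftrightarrow> (\<forall>x\<in>X. \<exists>s\<in>S. adj G x s)"

definition valid :: "'b graph \<Rightarrow> 'b set \<Rightarrow> 'b \<Rightarrow> bool \<Rightarrow> bool \<Rightarrow> 'b set \<Rightarrow> bool" where
  "valid G W r i d S \<longleftrightarrow> S \<subseteq> W \<and> (i \<longrightarrow> r \<in> S) \<and> dom_by G S (W - {r}) \<and> (d \<longrightarrow> dom_by G S {r})"

definition par :: "'b graph \<Rightarrow> 'b set \<Rightarrow> 'b \<Rightarrow> bool \<Rightarrow> bool \<Rightarrow> nat" where
  "par G W r i d = Min (card ` {S. valid G W r i d S})"

lemma fin_valid: "finite W \<Longrightarrow> finite (card ` {S. valid G W r i d S})"
proof -
  assume "finite W"
  moreover have "{S. valid G W r i d S} \<subseteq> Pow W" by (auto simp: valid_def)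
  ultimately have "finite {S. valid G W r i d S}"
    by (meson finite_Pow_iff finite_subset)
  then show ?thesis by simp
qed

lemma par_le: "finite W \<Longrightarrow> valid G W r i d S \<Longrightarrow> par G W r i d \<le> card S"
  unfolding par_def by (rule Min_le) (simp_all add: fin_valid[of W G r i d])

lemma par_ex: "finite W \<Longrightarrow> valid G W r i d S \<Longrightarrow> \<exists>S'. valid G W r i d S' \<and> card S' = par G W r i d"
proof -
  assume f: "finite W" and v: "valid G W r i d S"
  have "par G W r i d \<in> card ` {S. valid G W r i d S}"
    unfolding par_def by (rule Min_in) (use f v fin_valid[OF f, of G r i d] in blast)+
  then show ?thesis by auto
qed

lemma dom_by_cong: "S \<subseteq> W \<Longrightarrow> X \<subseteq> W \<Longrightarrow> (\<forall>x\<in>W. \<forall>y\<in>W. adj G x y = adj G' x y) \<Longrightarrow> dom_by G S X = dom_by G' S X"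
  unfolding dom_by_def
  apply (rule ball_cong[OF refl])
  apply (rule bex_cong[OF refl])
  by (meson subsetD)

lemma valid_cong: "r \<in> W \<Longrightarrow> (\<forall>x\<in>W. \<forall>y\<in>W. adj G x y = adj G' x y) \<Longrightarrow> valid G W r i d S = valid G' W r i d S"
proof -
  assume rW: "r \<in> W" and h: "\<forall>x\<in>W. \<forall>y\<in>W. adj G x y = adj G' x y"
  show ?thesis
  proof (cases "S \<subseteq> W")
    case True
    then show ?thesis unfolding valid_def using dom_by_cong[OF _ _ h, of S] rW by auto
  next
    case False
    then show ?thesis unfolding valid_def by auto
  qed
qed

lemma par_cong: "r \<in> W \<Longrightarrow> (\<forall>x\<in>W. \<forall>y\<in>W. adj G x y = adj G' x y) \<Longrightarrow> par G W r i d = par G' W r i d"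
proof -
  assume rW: "r \<in> W" and h: "\<forall>x\<in>W. \<forall>y\<in>W. adj G x y = adj G' x y"
  have "{S. valid G W r i d S} = {S. valid G' W r i d S}"
    using valid_cong[OF rW h] by blast
  then show ?thesis unfolding par_def by simp
qed

lemma valid_weaken: "valid G W r i d S \<Longrightarrow> (i' \<longrightarrow> i) \<Longrightarrow> (d' \<longrightarrow> d) \<Longrightarrow> valid G W r i' d' S"
  unfolding valid_def by blast

lemma gamma_le: "finite (verts G) \<Longrightarrow> total_dominating G S \<Longrightarrow> gamma_t G \<le> card S"
proof -
  assume f: "finite (verts G)" and t: "total_dominating G S"
  have "{S. total_dominating G S} \<subseteq> Pow (verts G)" by (auto simp: total_dominating_def)
  then have "finite {S. total_dominating G S}"
    using f by (meson finite_Pow_iff finite_subset)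
  then show ?thesis unfolding gamma_t_def using t by (intro Min_le) auto
qed

lemma gamma_ex: "finite (verts G) \<Longrightarrow> total_dominating G S \<Longrightarrow> \<exists>S'. total_dominating G S' \<and> card S' = gamma_t G"
proof -
  assume f: "finite (verts G)" and t: "total_dominating G S"
  have "{S. total_dominating G S} \<subseteq> Pow (verts G)" by (auto simp: total_dominating_def)
  then have "finite {S. total_dominating G S}"
    using f by (meson finite_Pow_iff finite_subset)
  then have "gamma_t G \<in> card ` {S. total_dominating G S}"
    unfolding gamma_t_def using t by (intro Min_in) auto
  then show ?thesis by auto
qed

locale rooted =
  fixes G :: "'b graph" and W :: "'b set" and r :: 'b
  assumes fin: "finite W" and rW: "r \<in> W" and nbr: "\<forall>x\<in>W. \<exists>y\<in>W. adj G x y"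
begin

abbreviation "pA \<equiv> par G W r True True"
abbreviation "pB \<equiv> par G W r True False"
abbreviation "pC \<equiv> par G W r False True"
abbreviation "pD \<equiv> par G W r False False"

lemma W_valid: "valid G W r i d W"
  using nbr rW unfolding valid_def dom_by_def by auto

lemma wit: "\<exists>S. valid G W r i d S \<and> card S = par G W r i d"
  using par_ex[OF fin W_valid] .

lemma le: "valid G W r i d S \<Longrightarrow> par G W r i d \<le> card S"
  using par_le[OF fin] .

lemma le2: "valid G W r i d S \<Longrightarrow> (i' \<longrightarrow> i) \<Longrightarrow> (d' \<longrightarrow> d) \<Longrightarrow> par G W r i' d' \<le> card S"
  by (rule le, rule valid_weaken)

lemma valid_fin: "valid G W r i d S \<Longrightarrow> finite S"
  using fin unfolding valid_def by (auto intro: finite_subset)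

lemma A_le_B: "pA \<le> pB + 1"
proof -
  obtain S where S: "valid G W r True False S" "card S = pB" using wit by blast
  obtain y where y: "y \<in> W" "adj G r y" using nbr rW by blast
  have "valid G W r True True (insert y S)"
    using S(1) y unfolding valid_def dom_by_def by auto
  then have "pA \<le> card (insert y S)" by (rule le)
  also have "\<dots> \<le> card S + 1" using valid_fin[OF S(1)] by (simp add: card_insert_if)
  finally show ?thesis using S by simp
qed

lemma B_le_D: "pB \<le> pD + 1"
proof -
  obtain S where S: "valid G W r False False S" "card S = pD" using wit by blast
  have "valid G W r True False (insert r S)"
    using S(1) rW unfolding valid_def dom_by_def by auto
  then have "pB \<le> card (insert r S)" by (rule le)
  also have "\<dots> \<le> card S + 1" using valid_fin[OF S(1)] by (simp add: card_insert_if)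
  finally show ?thesis using S by simp
qed

lemma A_le_C: "pA \<le> pC + 1"
proof -
  obtain S where S: "valid G W r False True S" "card S = pC" using wit by blast
  have "valid G W r True True (insert r S)"
    using S(1) rW unfolding valid_def dom_by_def by auto
  then have "pA \<le> card (insert r S)" by (rule le)
  also have "\<dots> \<le> card S + 1" using valid_fin[OF S(1)] by (simp add: card_insert_if)
  finally show ?thesis using S by simp
qed

lemma mono: "(i' \<longrightarrow> i) \<Longrightarrow> (d' \<longrightarrow> d) \<Longrightarrow> par G W r i' d' \<le> par G W r i d"
proof -
  assume h: "i' \<longrightarrow> i" "d' \<longrightarrow> d"
  obtain S where S: "valid G W r i d S" "card S = par G W r i d" using wit by blast
  show ?thesis using le[OF valid_weaken[OF S(1) h]] S(2) by simp
qed

lemma B_pos: "1 \<le> pB"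
proof -
  obtain S where S: "valid G W r True False S" "card S = pB" using wit by blast
  then have "r \<in> S" "finite S" using valid_fin unfolding valid_def by auto
  then have "card S \<noteq> 0" by auto
  then show ?thesis using S by simp
qed

end


locale pend = rooted G W r for G :: "'b graph" and W r +
  fixes p :: 'b
  assumes pW: "p \<notin> W"
    and V: "verts G = insert p W"
    and adj_p: "\<forall>y. adj G p y \<longleftrightarrow> y = r"
    and nbW: "\<forall>x\<in>W-{r}. \<forall>y. adj G x y \<longrightarrow> y \<in> W"
    and nbr_r: "\<forall>y. adj G r y \<longrightarrow> y \<in> insert p W"
begin

lemma finV: "finite (verts G)" using V fin by simp

lemma tds_lower:
  assumes S: "total_dominating G S"
  shows "pA \<le> card S \<or> pB + 1 \<le> card S"
proof -
  have SV: "S \<subseteq> insert p W" using S V unfolding total_dominating_def by simp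
  have finS: "finite S" using finite_subset[OF SV] fin by simp
  have "\<exists>s\<in>S. adj G p s" using S V unfolding total_dominating_def by simp
  then have rS: "r \<in> S" using adj_p by auto
  define S1 where "S1 = S \<inter> W"
  have d1: "dom_by G S1 (W - {r})"
    unfolding dom_by_def
  proof
    fix x assume x: "x \<in> W - {r}"
    then obtain s where s: "s \<in> S" "adj G x s" using S V unfolding total_dominating_def by auto
    have "s \<in> W" using nbW x s(2) by blast
    then have "s \<in> S1" using s(1) S1_def by simp
    then show "\<exists>s\<in>S1. adj G x s" using s(2) by blast
  qed
  have "S1 \<subseteq> W" "r \<in> S1" using rS rW S1_def by auto
  then have v10: "valid G W r True False S1" using d1 unfolding valid_def by simp
  have c1: "card S1 \<le> card S" unfolding S1_def using finS by (simp add: card_mono)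
  show ?thesis
  proof (cases "\<exists>s\<in>S1. adj G r s")
    case True
    then have "valid G W r True True S1" using v10 unfolding valid_def dom_by_def by auto
    then have "pA \<le> card S1" by (rule le)
    then show ?thesis using c1 by simp
  next
    case False
    obtain s where s: "s \<in> S" "adj G r s" using S V rW unfolding total_dominating_def by auto
    then have "s \<in> insert p W" using nbr_r by auto
    then have "s = p" using False s S1_def by auto
    then have "p \<in> S" using s by simp
    then have "S = insert p S1" using SV S1_def by auto
    moreover have "p \<notin> S1" using pW S1_def by auto
    moreover have "finite S1" using finS S1_def by simp
    ultimately have "card S = card S1 + 1" by simp
    moreover have "pB \<le> card S1" using v10 by (rule le)
    ultimately show ?thesis by simp
  qed
qed

lemma A_tds: "valid G W r True True S \<Longrightarrow> total_dominating G S"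
  unfolding total_dominating_def valid_def dom_by_def V using adj_p by auto

lemma gamma_eq: "gamma_t G = pA"
proof -
  obtain S where S: "valid G W r True True S" "card S = pA" using wit by blast
  have up: "gamma_t G \<le> pA" using gamma_le[OF finV A_tds[OF S(1)]] S(2) by simp
  obtain S' where S': "total_dominating G S'" "card S' = gamma_t G"
    using gamma_ex[OF finV A_tds[OF S(1)]] by blast
  have "pA \<le> card S'" using tds_lower[OF S'(1)] A_le_B by linarith
  then show ?thesis using up S' by simp
qed

end

locale pend2 = rooted G W r for G :: "'b graph" and W r +
  fixes w p :: 'b
  assumes wW: "w \<notin> W" and pW: "p \<notin> W" and wp: "w \<noteq> p"
    and V: "verts G = insert w (insert p W)"
    and adj_p: "\<forall>y. adj G p y \<longleftrightarrow> y = w"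
    and adj_w: "\<forall>y. adj G w y \<longleftrightarrow> (y = r \<or> y = p)"
    and nbW: "\<forall>x\<in>W-{r}. \<forall>y. adj G x y \<longrightarrow> y \<in> W"
    and nbr_r: "\<forall>y. adj G r y \<longrightarrow> y \<in> insert w W"
begin

lemma finV: "finite (verts G)" using V fin by simp

lemma tds_lower:
  assumes S: "total_dominating G S"
  shows "pB + 1 \<le> card S"
proof -
  have SV: "S \<subseteq> insert w (insert p W)" using S V unfolding total_dominating_def by simp
  have finS: "finite S" using finite_subset[OF SV] fin by simp
  have "\<exists>s\<in>S. adj G p s" using S V unfolding total_dominating_def by simp
  then have wS: "w \<in> S" using adj_p by auto
  define S1 where "S1 = S \<inter> W"
  have d1: "dom_by G S1 (W - {r})"
    unfolding dom_by_def
  proof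
    fix x assume x: "x \<in> W - {r}"
    then obtain s where s: "s \<in> S" "adj G x s" using S V unfolding total_dominating_def by auto
    have "s \<in> W" using nbW x s(2) by blast
    then have "s \<in> S1" using s(1) S1_def by simp
    then show "\<exists>s\<in>S1. adj G x s" using s(2) by blast
  qed
  have wS1: "w \<notin> S1" "p \<notin> S1" using wW pW S1_def by auto
  show ?thesis
  proof (cases "r \<in> S")
    case True
    have "S1 \<subseteq> W" "r \<in> S1" using True rW S1_def by auto
    then have v10: "valid G W r True False S1" using d1 unfolding valid_def by simp
    have "insert w S1 \<subseteq> S" using wS S1_def by auto
    then have "card (insert w S1) \<le> card S" using finS by (simp add: card_mono)
    then have "card S1 + 1 \<le> card S" using wS1 finS S1_def by simp
    moreover have "pB \<le> card S1" using v10 by (rule le)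
    ultimately show ?thesis by simp
  next
    case False
    obtain s where s: "s \<in> S" "adj G w s" using S V unfolding total_dominating_def by auto
    then have pS: "p \<in> S" using adj_w False by auto
    have "insert r S1 \<subseteq> W" using rW S1_def by auto
    then have v10: "valid G W r True False (insert r S1)" using d1 unfolding valid_def dom_by_def by auto
    have "pB \<le> card (insert r S1)" using v10 by (rule le)
    also have "\<dots> \<le> card S1 + 1" using finS S1_def by (simp add: card_insert_if)
    finally have a: "pB \<le> card S1 + 1" .
    have "insert w (insert p S1) \<subseteq> S" using wS pS S1_def by auto
    then have "card (insert w (insert p S1)) \<le> card S" using finS by (simp add: card_mono)
    then have "card S1 + 2 \<le> card S" using wS1 wp finS S1_def by simp
    then show ?thesis using a by simp
  qed
qed

lemma gamma_eq: "gamma_t G = pB + 1"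
proof -
  obtain S where S: "valid G W r True False S" "card S = pB" using wit by blast
  have fS: "finite S" using valid_fin[OF S(1)] .
  have wS: "w \<notin> S" using S(1) wW unfolding valid_def by auto
  have t: "total_dominating G (insert w S)"
    unfolding total_dominating_def
  proof
    show "insert w S \<subseteq> verts G" using S(1) V unfolding valid_def by auto
    show "\<forall>v\<in>verts G. \<exists>u\<in>insert w S. adj G v u"
    proof
      fix x assume x: "x \<in> verts G"
      have rS: "r \<in> S" using S(1) unfolding valid_def by simp
      consider "x = w" | "x = p" | "x = r" | "x \<in> W - {r}" using x V by auto
      then show "\<exists>u\<in>insert w S. adj G x u"
      proof cases
        case 1 then show ?thesis using adj_w rS by auto
      next
        case 2 then show ?thesis using adj_p by auto
      next
        case 3 then show ?thesis using adj_w adj_sym[of G r w] by auto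
      next
        case 4 then show ?thesis using S(1) unfolding valid_def dom_by_def by auto
      qed
    qed
  qed
  have up: "gamma_t G \<le> pB + 1" using gamma_le[OF finV t] S(2) fS wS by simp
  obtain S' where S': "total_dominating G S'" "card S' = gamma_t G"
    using gamma_ex[OF finV t] by blast
  show ?thesis using tds_lower[OF S'(1)] up S' by simp
qed

end


locale glue0 = R1: rooted K W1 r1 + R2: rooted K W2 r2
  for K :: "'b graph" and W1 r1 W2 r2 +
  assumes disj: "W1 \<inter> W2 = {}"
    and V: "verts K = W1 \<union> W2"
    and a12: "adj K r1 r2"
    and n1: "\<forall>x\<in>W1-{r1}. \<forall>y. adj K x y \<longrightarrow> y \<in> W1"
    and n2: "\<forall>x\<in>W2-{r2}. \<forall>y. adj K x y \<longrightarrow> y \<in> W2"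
    and nr1: "\<forall>y. adj K r1 y \<longrightarrow> y \<in> W1 \<or> y = r2"
    and nr2: "\<forall>y. adj K r2 y \<longrightarrow> y \<in> W2 \<or> y = r1"
begin

lemma swap: "glue0 K W2 r2 W1 r1"
  apply (rule glue0.intro[OF R2.rooted_axioms R1.rooted_axioms])
  apply (rule glue0_axioms.intro)
  using disj apply blast
  using V apply blast
  using a12 adj_sym apply metis
  using n2 apply blast
  using n1 apply blast
  using nr2 apply blast
  using nr1 apply blast
  done

lemma finV: "finite (verts K)" using V R1.fin R2.fin by simp

lemma part1:
  assumes S: "total_dominating K S"
  shows "valid K W1 r1 (r1 \<in> S) (r2 \<notin> S) (S \<inter> W1)"
proof -
  have d1: "dom_by K (S \<inter> W1) (W1 - {r1})"
    unfolding dom_by_def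
  proof
    fix x assume x: "x \<in> W1 - {r1}"
    then obtain s where s: "s \<in> S" "adj K x s" using S V unfolding total_dominating_def by blast
    have "s \<in> W1" using n1 x s(2) by blast
    then show "\<exists>s\<in>S \<inter> W1. adj K x s" using s by blast
  qed
  have d2: "r2 \<notin> S \<longrightarrow> dom_by K (S \<inter> W1) {r1}"
  proof
    assume r2: "r2 \<notin> S"
    obtain s where s: "s \<in> S" "adj K r1 s" using S V R1.rW unfolding total_dominating_def by blast
    have "s \<in> W1" using nr1 s r2 by blast
    then show "dom_by K (S \<inter> W1) {r1}" unfolding dom_by_def using s by blast
  qed
  show ?thesis unfolding valid_def using d1 d2 R1.rW by blast
qed

lemma cardS:
  assumes S: "total_dominating K S"
  shows "card S = card (S \<inter> W1) + card (S \<inter> W2)"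
proof -
  have SV: "S \<subseteq> W1 \<union> W2" using S V unfolding total_dominating_def by simp
  have f: "finite (S \<inter> W1)" "finite (S \<inter> W2)" using R1.fin R2.fin by simp_all
  have "S = (S \<inter> W1) \<union> (S \<inter> W2)" using SV by blast
  moreover have "(S \<inter> W1) \<inter> (S \<inter> W2) = {}" using disj by blast
  ultimately show ?thesis using f card_Un_disjoint by metis
qed

lemma lower:
  assumes S: "total_dominating K S"
  shows "R1.pB + R2.pB \<le> card S \<or> R1.pA + R2.pD \<le> card S \<or> R1.pD + R2.pA \<le> card S \<or> R1.pC + R2.pC \<le> card S"
proof -
  have v1: "valid K W1 r1 (r1 \<in> S) (r2 \<notin> S) (S \<inter> W1)" using part1[OF S] .
  have v2: "valid K W2 r2 (r2 \<in> S) (r1 \<notin> S) (S \<inter> W2)" using glue0.part1[OF swap S] .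
  have c: "card S = card (S \<inter> W1) + card (S \<inter> W2)" using cardS[OF S] .
  consider "r1 \<in> S" "r2 \<in> S" | "r1 \<in> S" "r2 \<notin> S" | "r1 \<notin> S" "r2 \<in> S" | "r1 \<notin> S" "r2 \<notin> S" by blast
  then show ?thesis
  proof cases
    case 1
    then have "R1.pB \<le> card (S \<inter> W1)" "R2.pB \<le> card (S \<inter> W2)"
      by (auto intro!: R1.le2[OF v1] R2.le2[OF v2])
    then show ?thesis using c by simp
  next
    case 2
    then have "R1.pA \<le> card (S \<inter> W1)" "R2.pD \<le> card (S \<inter> W2)"
      by (auto intro!: R1.le2[OF v1] R2.le2[OF v2])
    then show ?thesis using c by simp
  next
    case 3
    then have "R1.pD \<le> card (S \<inter> W1)" "R2.pA \<le> card (S \<inter> W2)"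
      by (auto intro!: R1.le2[OF v1] R2.le2[OF v2])
    then show ?thesis using c by simp
  next
    case 4
    then have "R1.pC \<le> card (S \<inter> W1)" "R2.pC \<le> card (S \<inter> W2)"
      by (auto intro!: R1.le2[OF v1] R2.le2[OF v2])
    then show ?thesis using c by simp
  qed
qed

lemma upper:
  assumes S1: "valid K W1 r1 True d1 S1" and S2: "valid K W2 r2 i2 d2 S2"
    and h1: "d1 \<or> i2" and h2: "d2 \<or> True"
  shows "total_dominating K (S1 \<union> S2)"
  unfolding total_dominating_def
proof
  show "S1 \<union> S2 \<subseteq> verts K" using S1 S2 V unfolding valid_def by blast
  show "\<forall>v\<in>verts K. \<exists>u\<in>S1 \<union> S2. adj K v u"
  proof
    fix x assume x: "x \<in> verts K"
    have r1S: "r1 \<in> S1" using S1 unfolding valid_def by simp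
    consider "x \<in> W1 - {r1}" | "x = r1" | "x \<in> W2 - {r2}" | "x = r2" using x V by blast
    then show "\<exists>u\<in>S1 \<union> S2. adj K x u"
    proof cases
      case 1 then show ?thesis using S1 unfolding valid_def dom_by_def by blast
    next
      case 2
      show ?thesis
      proof (cases d1)
        case True then show ?thesis using S1 2 unfolding valid_def dom_by_def by blast
      next
        case False
        then have "r2 \<in> S2" using h1 S2 unfolding valid_def by blast
        then show ?thesis using 2 a12 by blast
      qed
    next
      case 3 then show ?thesis using S2 unfolding valid_def dom_by_def by blast
    next
      case 4 then show ?thesis using r1S a12 adj_sym[of K r1 r2] by blast
    qed
  qed
qed

end

locale glue1 = R1: rooted K W1 r1 + R2: rooted K W2 r2
  for K :: "'b graph" and W1 r1 W2 r2 +
  fixes z :: 'b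
  assumes disj: "W1 \<inter> W2 = {}" and z1: "z \<notin> W1" and z2: "z \<notin> W2"
    and V: "verts K = insert z (W1 \<union> W2)"
    and az: "\<forall>y. adj K z y \<longleftrightarrow> (y = r1 \<or> y = r2)"
    and n1: "\<forall>x\<in>W1-{r1}. \<forall>y. adj K x y \<longrightarrow> y \<in> W1"
    and n2: "\<forall>x\<in>W2-{r2}. \<forall>y. adj K x y \<longrightarrow> y \<in> W2"
    and nr1: "\<forall>y. adj K r1 y \<longrightarrow> y \<in> W1 \<or> y = z"
    and nr2: "\<forall>y. adj K r2 y \<longrightarrow> y \<in> W2 \<or> y = z"
begin

lemma swap: "glue1 K W2 r2 W1 r1 z"
  apply (rule glue1.intro[OF R2.rooted_axioms R1.rooted_axioms])
  apply (rule glue1_axioms.intro)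
  using disj apply blast
  using z2 apply blast
  using z1 apply blast
  using V apply blast
  using az apply blast
  using n2 apply blast
  using n1 apply blast
  using nr2 apply blast
  using nr1 apply blast
  done

lemma finV: "finite (verts K)" using V R1.fin R2.fin by simp

lemma part1:
  assumes S: "total_dominating K S"
  shows "valid K W1 r1 (r1 \<in> S) (z \<notin> S) (S \<inter> W1)"
proof -
  have d1: "dom_by K (S \<inter> W1) (W1 - {r1})"
    unfolding dom_by_def
  proof
    fix x assume x: "x \<in> W1 - {r1}"
    then obtain s where s: "s \<in> S" "adj K x s" using S V unfolding total_dominating_def by blast
    have "s \<in> W1" using n1 x s(2) by blast
    then show "\<exists>s\<in>S \<inter> W1. adj K x s" using s by blast
  qed
  have d2: "z \<notin> S \<longrightarrow> dom_by K (S \<inter> W1) {r1}"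
  proof
    assume zS: "z \<notin> S"
    obtain s where s: "s \<in> S" "adj K r1 s" using S V R1.rW unfolding total_dominating_def by blast
    have "s \<in> W1" using nr1 s zS by blast
    then show "dom_by K (S \<inter> W1) {r1}" unfolding dom_by_def using s by blast
  qed
  show ?thesis unfolding valid_def using d1 d2 R1.rW by blast
qed

lemma cardS:
  assumes S: "total_dominating K S"
  shows "card S = card (S \<inter> W1) + card (S \<inter> W2) + (if z \<in> S then 1 else 0)"
proof -
  have SV: "S \<subseteq> insert z (W1 \<union> W2)" using S V unfolding total_dominating_def by simp
  have f: "finite (S \<inter> W1)" "finite (S \<inter> W2)" using R1.fin R2.fin by simp_all
  have e: "S = (S \<inter> W1) \<union> (S \<inter> W2) \<union> (S \<inter> {z})" using SV by blast
  have d: "((S \<inter> W1) \<union> (S \<inter> W2)) \<inter> (S \<inter> {z}) = {}" using z1 z2 by blast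
  have "card S = card ((S \<inter> W1) \<union> (S \<inter> W2)) + card (S \<inter> {z})"
    using e d f card_Un_disjoint[of "(S \<inter> W1) \<union> (S \<inter> W2)" "S \<inter> {z}"] by simp
  moreover have "(S \<inter> W1) \<inter> (S \<inter> W2) = {}" using disj by blast
  then have "card ((S \<inter> W1) \<union> (S \<inter> W2)) = card (S \<inter> W1) + card (S \<inter> W2)"
    using f card_Un_disjoint by metis
  moreover have "card (S \<inter> {z}) = (if z \<in> S then 1 else 0)" by auto
  ultimately show ?thesis by simp
qed

lemma lower:
  assumes S: "total_dominating K S"
  shows "R1.pA + R2.pC \<le> card S \<or> R1.pC + R2.pA \<le> card S \<or> 1 + R1.pB + R2.pD \<le> card S \<or> 1 + R1.pD + R2.pB \<le> card S"
proof -
  have v1: "valid K W1 r1 (r1 \<in> S) (z \<notin> S) (S \<inter> W1)" using part1[OF S] .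
  have v2: "valid K W2 r2 (r2 \<in> S) (z \<notin> S) (S \<inter> W2)" using glue1.part1[OF swap S] .
  have c: "card S = card (S \<inter> W1) + card (S \<inter> W2) + (if z \<in> S then 1 else 0)" using cardS[OF S] .
  have "\<exists>s\<in>S. adj K z s" using S V unfolding total_dominating_def by blast
  then have r12: "r1 \<in> S \<or> r2 \<in> S" by (metis az)
  consider "z \<in> S" "r1 \<in> S" | "z \<in> S" "r2 \<in> S" | "z \<notin> S" "r1 \<in> S" | "z \<notin> S" "r2 \<in> S" using r12 by blast
  then show ?thesis
  proof cases
    case 1
    then have "R1.pB \<le> card (S \<inter> W1)" "R2.pD \<le> card (S \<inter> W2)"
      by (auto intro!: R1.le2[OF v1] R2.le2[OF v2])
    then show ?thesis using c 1 by simp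
  next
    case 2
    then have "R1.pD \<le> card (S \<inter> W1)" "R2.pB \<le> card (S \<inter> W2)"
      by (auto intro!: R1.le2[OF v1] R2.le2[OF v2])
    then show ?thesis using c 2 by simp
  next
    case 3
    then have "R1.pA \<le> card (S \<inter> W1)" "R2.pC \<le> card (S \<inter> W2)"
      by (auto intro!: R1.le2[OF v1] R2.le2[OF v2])
    then show ?thesis using c 3 by simp
  next
    case 4
    then have "R1.pC \<le> card (S \<inter> W1)" "R2.pA \<le> card (S \<inter> W2)"
      by (auto intro!: R1.le2[OF v1] R2.le2[OF v2])
    then show ?thesis using c 4 by simp
  qed
qed

lemma upper:
  assumes S1: "valid K W1 r1 True False S1" and S2: "valid K W2 r2 False False S2"
  shows "total_dominating K (insert z (S1 \<union> S2))"
  unfolding total_dominating_def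
proof
  show "insert z (S1 \<union> S2) \<subseteq> verts K" using S1 S2 V unfolding valid_def by blast
  show "\<forall>v\<in>verts K. \<exists>u\<in>insert z (S1 \<union> S2). adj K v u"
  proof
    fix x assume x: "x \<in> verts K"
    have r1S: "r1 \<in> S1" using S1 unfolding valid_def by simp
    consider "x \<in> W1 - {r1}" | "x = r1" | "x \<in> W2 - {r2}" | "x = r2" | "x = z" using x V by blast
    then show "\<exists>u\<in>insert z (S1 \<union> S2). adj K x u"
    proof cases
      case 1 then show ?thesis using S1 unfolding valid_def dom_by_def by blast
    next
      case 2 then show ?thesis using az adj_sym[of K r1 z] by blast
    next
      case 3 then show ?thesis using S2 unfolding valid_def dom_by_def by blast
    next
      case 4 then show ?thesis using az adj_sym[of K r2 z] by blast
    next
      case 5 then show ?thesis using r1S az by blast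
    qed
  qed
qed

lemma card_upper:
  assumes S1: "valid K W1 r1 True False S1" and S2: "valid K W2 r2 False False S2"
  shows "card (insert z (S1 \<union> S2)) \<le> card S1 + card S2 + 1"
proof -
  have "finite S1" "finite S2" using R1.valid_fin[OF S1] R2.valid_fin[OF S2] .
  then show ?thesis by (simp add: card_insert_if card_Un_le le_SucI)
qed

end


lemma gamma_sub_empty: "gamma_t (subdivide G {}) = gamma_t (G :: 'a graph)"
proof -
  have "{S. total_dominating (subdivide G {}) S} = (\<lambda>S. Inl ` S) ` {S. total_dominating G S}"
  proof (rule set_eqI, rule iffI)
    fix S' assume "S' \<in> {S. total_dominating (subdivide G {}) S}"
    then have t: "total_dominating (subdivide G {}) S'" by simp
    define S where "S = {a. Inl a \<in> S'}"
    have sub: "S' \<subseteq> Inl ` verts G" using t unfolding total_dominating_def verts_subdivide by simp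
    then have eq: "S' = Inl ` S" unfolding S_def by auto
    have "total_dominating G S"
      unfolding total_dominating_def
    proof
      show "S \<subseteq> verts G" using sub unfolding S_def by auto
      show "\<forall>v\<in>verts G. \<exists>u\<in>S. adj G v u"
      proof
        fix a assume a: "a \<in> verts G"
        then have "Inl a \<in> verts (subdivide G {})" unfolding verts_subdivide by simp
        then obtain s where s: "s \<in> S'" "adj (subdivide G {}) (Inl a) s" using t unfolding total_dominating_def by blast
        then obtain b where b: "s = Inl b" "b \<in> S" using eq by blast
        have "adj (subdivide G {}) (Inl a) (Inl b)" using s(2) b(1) by simp
        then have "adj G a b" unfolding adj_sub_LL by (simp add: adj_def)
        then show "\<exists>u\<in>S. adj G a u" using b by blast
      qed
    qed
    then show "S' \<in> (\<lambda>S. Inl ` S) ` {S. total_dominating G S}" using eq by blast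
  next
    fix S' :: "('a + 'a set) set" assume "S' \<in> (\<lambda>S. Inl ` S) ` {S. total_dominating G S}"
    then obtain S where S: "total_dominating G S" and eq: "S' = Inl ` S" by blast
    have "total_dominating (subdivide G {}) S'"
      unfolding total_dominating_def
    proof
      show "S' \<subseteq> verts (subdivide G {})" using S eq unfolding total_dominating_def verts_subdivide by auto
      show "\<forall>v\<in>verts (subdivide G {}). \<exists>u\<in>S'. adj (subdivide G {}) v u"
      proof
        fix v assume "v \<in> verts (subdivide G {})"
        then obtain a where a: "v = Inl a" "a \<in> verts G" unfolding verts_subdivide by blast
        then obtain b where b: "b \<in> S" "adj G a b" using S unfolding total_dominating_def by blast
        have "adj (subdivide G {}) (Inl a) (Inl b)" using b(2) unfolding adj_sub_LL by (simp add: adj_def)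
        then show "\<exists>u\<in>S'. adj (subdivide G {}) v u" using a b eq by blast
      qed
    qed
    then show "S' \<in> {S. total_dominating (subdivide G {}) S}" by simp
  qed
  moreover have "(\<lambda>S. card (Inl ` S)) = (card :: 'a set \<Rightarrow> nat)"
    by (rule ext) (simp add: card_image)
  ultimately have "card ` {S. total_dominating (subdivide G {}) S} = card ` {S. total_dominating G S}"
    by (metis image_image)
  then show ?thesis unfolding gamma_t_def by simp
qed


lemma reach_count:
  fixes V :: "'a set" and E :: "'a set set" and r :: 'a
  assumes finV: "finite V"
    and Ed: "\<forall>e\<in>E. \<exists>x y. x \<noteq> y \<and> x \<in> V \<and> y \<in> V \<and> e = {x, y}"
    and rV: "r \<in> V"
    and reach: "\<forall>x\<in>V. (r, x) \<in> {(a, b). {a, b} \<in> E}\<^sup>*"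
  shows "card V \<le> card E + 1"
proof -
  define R where "R = {(a, b). {a, b} \<in> E}"
  have finE: "finite E"
  proof (rule finite_subset[of E "Pow V"])
    show "E \<subseteq> Pow V"
    proof
      fix e assume "e \<in> E"
      then obtain x y where "x \<in> V" "y \<in> V" "e = {x, y}" using Ed by blast
      then show "e \<in> Pow V" by simp
    qed
    show "finite (Pow V)" using finV by simp
  qed
  define dist where "dist x = (LEAST n. (r, x) \<in> R ^^ n)" for x
  have ex: "\<exists>n. (r, x) \<in> R ^^ n" if "x \<in> V" for x
  proof -
    have "(r, x) \<in> R\<^sup>*" using reach that unfolding R_def by blast
    then show ?thesis by (simp add: rtrancl_power)
  qed
  have dist_in: "(r, x) \<in> R ^^ dist x" if "x \<in> V" for x
    unfolding dist_def using ex[OF that] by (rule LeastI_ex)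
  have dist_le: "dist x \<le> n" if "(r, x) \<in> R ^^ n" for x n
    unfolding dist_def using that by (rule Least_le)
  have prex: "\<exists>p. (r, p) \<in> R ^^ (dist x - 1) \<and> (p, x) \<in> R" if "x \<in> V - {r}" for x
  proof -
    have d: "(r, x) \<in> R ^^ dist x" using dist_in that by blast
    have "dist x \<noteq> 0"
    proof
      assume "dist x = 0"
      then have "(r, x) \<in> R ^^ 0" using d by simp
      then have "x = r" by (rule relpow_0_E) simp
      then show False using that by simp
    qed
    then obtain m where m: "dist x = Suc m" using not0_implies_Suc by blast
    then have "(r, x) \<in> R ^^ Suc m" using d by simp
    then obtain p where "(r, p) \<in> R ^^ m" "(p, x) \<in> R" by (rule relpow_Suc_E)
    then show ?thesis using m by auto
  qed
  have "\<forall>x\<in>V - {r}. \<exists>p. (r, p) \<in> R ^^ (dist x - 1) \<and> (p, x) \<in> R" using prex by blast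
  then obtain pr where prall: "\<forall>x\<in>V - {r}. (r, pr x) \<in> R ^^ (dist x - 1) \<and> (pr x, x) \<in> R"
    by (rule bchoice[elim_format]) blast
  have pr: "(r, pr x) \<in> R ^^ (dist x - 1) \<and> (pr x, x) \<in> R" if "x \<in> V - {r}" for x
    using prall that by blast
  have dpos: "dist x \<ge> 1" if "x \<in> V - {r}" for x
  proof (rule ccontr)
    assume "\<not> dist x \<ge> 1"
    then have d0: "dist x = 0" by simp
    have "(r, x) \<in> R ^^ dist x" using dist_in[OF DiffD1[OF that]] .
    then have "(r, x) \<in> R ^^ 0" unfolding d0 .
    then have "x = r" by (rule relpow_0_E) simp
    then show False using that by simp
  qed
  have dlt: "dist (pr x) < dist x" if "x \<in> V - {r}" for x
  proof -
    have "dist (pr x) \<le> dist x - 1" using dist_le[OF conjunct1[OF pr[OF that]]] .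
    then show ?thesis using dpos[OF that] by simp
  qed
  define f where "f x = {pr x, x}" for x
  have fE: "f x \<in> E" if "x \<in> V - {r}" for x
  proof -
    have "(pr x, x) \<in> R" using conjunct2[OF pr[OF that]] .
    then show ?thesis unfolding f_def R_def by simp
  qed
  have inj: "inj_on f (V - {r})"
  proof (rule inj_onI)
    fix x y assume x: "x \<in> V - {r}" and y: "y \<in> V - {r}" and e: "f x = f y"
    show "x = y"
    proof (rule ccontr)
      assume ne: "x \<noteq> y"
      have "{pr x, x} = {pr y, y}" using e unfolding f_def .
      then have "pr x = y \<and> pr y = x" using ne by (metis doubleton_eq_iff)
      then show False using dlt[OF x] dlt[OF y] by simp
    qed
  qed
  have "card (V - {r}) \<le> card E"
    using card_inj_on_le[OF inj _ finE] fE by blast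
  moreover have "card (V - {r}) = card V - 1" using rV finV by simp
  moreover have "card V \<noteq> 0" using rV finV by (metis card_0_eq empty_iff)
  ultimately show ?thesis by simp
qed

lemma tree_simple:
  assumes "is_tree T"
  shows "finite (verts T)" "\<forall>e\<in>edges T. \<exists>x y. x \<noteq> y \<and> x \<in> verts T \<and> y \<in> verts T \<and> e = {x, y}"
  using assms unfolding is_tree_def simple_graph_def by auto

lemma edge_in:
  assumes "is_tree T" "{a, b} \<in> edges T"
  shows "a \<in> verts T" "b \<in> verts T" "a \<noteq> b"
proof -
  obtain x y where xy: "x \<noteq> y" "x \<in> verts T" "y \<in> verts T" "{a, b} = {x, y}"
    using tree_simple(2)[OF assms(1)] assms(2) by blast
  then show "a \<in> verts T" "b \<in> verts T" "a \<noteq> b" by (metis doubleton_eq_iff)+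
qed

lemma tree_finE:
  assumes "is_tree T" shows "finite (edges T)"
proof (rule finite_subset[of _ "Pow (verts T)"])
  show "edges T \<subseteq> Pow (verts T)"
  proof
    fix e assume "e \<in> edges T"
    then obtain x y where "x \<in> verts T" "y \<in> verts T" "e = {x, y}" using tree_simple(2)[OF assms] by blast
    then show "e \<in> Pow (verts T)" by simp
  qed
  show "finite (Pow (verts T))" using tree_simple(1)[OF assms] by simp
qed

lemma tree_reach:
  assumes "is_tree T" "x \<in> verts T" "y \<in> verts T"
  shows "(x, y) \<in> {(a, b). {a, b} \<in> edges T}\<^sup>*"
  using assms unfolding is_tree_def connected_graph_def adj_def by blast

lemma tree_no_cycle:
  assumes T: "is_tree T" and e1: "{u, y} \<in> edges T" and e2: "{u, y'} \<in> edges T" and ne: "y \<noteq> y'"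
    and p: "(y, y') \<in> {(a, b). {a, b} \<in> edges T \<and> a \<noteq> u \<and> b \<noteq> u}\<^sup>*"
  shows False
proof -
  define E' where "E' = edges T - {{u, y'}}"
  define R' where "R' = {(a, b). {a, b} \<in> E'}"
  have uV: "u \<in> verts T" using edge_in[OF T e1] by simp
  have sub: "{(a, b). {a, b} \<in> edges T \<and> a \<noteq> u \<and> b \<noteq> u} \<subseteq> R'"
  proof
    fix q assume "q \<in> {(a, b). {a, b} \<in> edges T \<and> a \<noteq> u \<and> b \<noteq> u}"
    then obtain a b where q: "q = (a, b)" "{a, b} \<in> edges T" "a \<noteq> u" "b \<noteq> u" by blast
    then have "{a, b} \<noteq> {u, y'}" by (metis doubleton_eq_iff)
    then show "q \<in> R'" unfolding R'_def E'_def using q by simp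
  qed
  have yy': "(y, y') \<in> R'\<^sup>*" using rtrancl_mono[OF sub] p by blast
  have "{u, y} \<noteq> {u, y'}" using ne by (metis doubleton_eq_iff)
  then have uy: "(u, y) \<in> R'" unfolding R'_def E'_def using e1 by simp
  have reach: "(u, x) \<in> R'\<^sup>*" if "x \<in> verts T" for x
  proof -
    have "(u, x) \<in> {(a, b). {a, b} \<in> edges T}\<^sup>*" using tree_reach[OF T uV that] .
    then show ?thesis
    proof (induction rule: rtrancl_induct)
      case base then show ?case by simp
    next
      case (step a b)
      show ?case
      proof (cases "{a, b} = {u, y'}")
        case False
        then have "(a, b) \<in> R'" using step(2) unfolding R'_def E'_def by simp
        then show ?thesis using step(3) by simp
      next
        case True
        then have "(a = u \<and> b = y') \<or> (a = y' \<and> b = u)" by (metis doubleton_eq_iff)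
        then show ?thesis
        proof
          assume "a = u \<and> b = y'"
          then show ?thesis using converse_rtrancl_into_rtrancl[OF uy yy'] by simp
        next
          assume "a = y' \<and> b = u"
          then show ?thesis by simp
        qed
      qed
    qed
  qed
  have "card (verts T) \<le> card E' + 1"
  proof (rule reach_count[of "verts T" E' u])
    show "finite (verts T)" using tree_simple(1)[OF T] .
    show "\<forall>e\<in>E'. \<exists>x y. x \<noteq> y \<and> x \<in> verts T \<and> y \<in> verts T \<and> e = {x, y}"
      using tree_simple(2)[OF T] unfolding E'_def by blast
    show "u \<in> verts T" using uV .
    show "\<forall>x\<in>verts T. (u, x) \<in> {(a, b). {a, b} \<in> E'}\<^sup>*" using reach unfolding R'_def by blast
  qed
  moreover have "card E' = card (edges T) - 1" unfolding E'_def using e2 tree_finE[OF T] by simp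
  moreover have "card (edges T) = card (verts T) - 1" using T unfolding is_tree_def by simp
  moreover have "card (edges T) \<noteq> 0" using e1 tree_finE[OF T] by (metis card_0_eq empty_iff)
  ultimately show False by simp
qed


locale side =
  fixes T :: "'a graph" and u u' :: 'a
  assumes tree: "is_tree T" and leaf: "is_leaf T u'" and uu': "adj T u u'" and cl: "class3 T"
begin

definition WW :: "'a set set \<Rightarrow> ('a + 'a set) set" where
  "WW F = Inl ` (verts T - {u'}) \<union> Inr ` F"

definition E1 :: "'a set set" where "E1 = {e \<in> edges T. u' \<notin> e}"

lemma e_uu': "{u, u'} \<in> edges T" using uu' unfolding adj_def .

lemma uV: "u \<in> verts T" "u' \<in> verts T" "u \<noteq> u'"
  using edge_in[OF tree e_uu'] by simp_all

lemma finV: "finite (verts T)" using tree_simple(1)[OF tree] .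

lemma leafnb: "adj T u' y \<Longrightarrow> y = u"
proof -
  assume a: "adj T u' y"
  have c: "card {z \<in> verts T. adj T u' z} = 1" using leaf unfolding is_leaf_def degree_def by simp
  have uin: "u \<in> {z \<in> verts T. adj T u' z}" using uV uu' adj_sym[of T u u'] by simp
  have yV: "y \<in> verts T" using edge_in(2)[OF tree, of u' y] a unfolding adj_def by simp
  have yin: "y \<in> {z \<in> verts T. adj T u' z}" using yV a by simp
  from c obtain z where z: "{z \<in> verts T. adj T u' z} = {z}" by (rule card_1_singletonE)
  have "u = z" using uin unfolding z by simp
  moreover have "y = z" using yin unfolding z by simp
  ultimately show "y = u" by simp
qed

lemma edge_u': "e \<in> edges T \<Longrightarrow> u' \<in> e \<Longrightarrow> e = {u, u'}"
proof -
  assume e: "e \<in> edges T" and u'e: "u' \<in> e"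
  obtain x y where xy: "x \<noteq> y" "e = {x, y}" using tree_simple(2)[OF tree] e by blast
  show ?thesis
  proof (cases "x = u'")
    case True
    then have "adj T u' y" using e xy unfolding adj_def by simp
    then show ?thesis using leafnb True xy by (simp add: insert_commute)
  next
    case False
    then have "y = u'" using u'e xy by simp
    then have "adj T u' x" using e xy unfolding adj_def by (simp add: insert_commute)
    then show ?thesis using leafnb \<open>y = u'\<close> xy by simp
  qed
qed

lemma E1_sub: "E1 \<subseteq> edges T" unfolding E1_def by blast

lemma uu'_notin: "{u, u'} \<notin> E1" unfolding E1_def by simp

lemma E1_elem: "e \<in> E1 \<Longrightarrow> \<exists>a b. a \<noteq> b \<and> a \<in> verts T \<and> b \<in> verts T \<and> a \<noteq> u' \<and> b \<noteq> u' \<and> e = {a, b}"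
proof -
  assume e: "e \<in> E1"
  then have e1: "e \<in> edges T" "u' \<notin> e" unfolding E1_def by auto
  obtain x y where xy: "x \<noteq> y" "x \<in> verts T" "y \<in> verts T" "e = {x, y}" using tree_simple(2)[OF tree] e1(1) by blast
  moreover have "x \<noteq> u'" "y \<noteq> u'" using e1(2) xy(4) by auto
  ultimately show ?thesis by (intro exI[of _ x] exI[of _ y]) simp
qed

lemma finE: "finite (edges T)" using tree_finE[OF tree] .

lemma WW_cases: "x \<in> WW F \<longleftrightarrow> (\<exists>a. x = Inl a \<and> a \<in> verts T \<and> a \<noteq> u') \<or> (\<exists>e. x = Inr e \<and> e \<in> F)"
  unfolding WW_def by blast

lemma WW_Inl[simp]: "Inl a \<in> WW F \<longleftrightarrow> a \<in> verts T \<and> a \<noteq> u'"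
  unfolding WW_def by blast

lemma WW_Inr[simp]: "Inr e \<in> WW F \<longleftrightarrow> e \<in> F"
  unfolding WW_def by blast

lemma finWW: "finite F \<Longrightarrow> finite (WW F)"
  unfolding WW_def using finV by simp

lemma E1_fin: "F \<subseteq> E1 \<Longrightarrow> finite F"
proof -
  assume "F \<subseteq> E1"
  then have "F \<subseteq> edges T" using E1_sub by (rule subset_trans)
  then show ?thesis using finE by (rule finite_subset)
qed

lemma nb_u'_free: "F \<subseteq> E1 \<Longrightarrow> e \<in> F \<Longrightarrow> a \<in> e \<Longrightarrow> a \<in> verts T \<and> a \<noteq> u'"
proof -
  assume F: "F \<subseteq> E1" and e: "e \<in> F" and a: "a \<in> e"
  obtain x y where xy: "x \<in> verts T" "y \<in> verts T" "x \<noteq> u'" "y \<noteq> u'" "e = {x, y}"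
    using E1_elem F e by blast
  have "a = x \<or> a = y" using a xy(5) by simp
  then show ?thesis using xy by blast
qed

lemma edgeV: "{a, b} \<in> edges T \<Longrightarrow> a \<in> verts T \<and> b \<in> verts T"
proof -
  assume h: "{a, b} \<in> edges T"
  show ?thesis using edge_in(1)[OF tree h] edge_in(2)[OF tree h] by simp
qed

lemma edge_not_u': "{a, b} \<in> edges T \<Longrightarrow> a \<noteq> u \<Longrightarrow> b \<noteq> u'"
proof
  assume e: "{a, b} \<in> edges T" and au: "a \<noteq> u" and b: "b = u'"
  then have "adj T u' a" unfolding adj_def by (simp add: insert_commute)
  then show False using leafnb au by blast
qed

lemma adjF_closed:
  assumes F: "F \<subseteq> E1" and x: "x \<in> WW F" and xu: "x \<noteq> Inl u" and a: "adj (subdivide T F) x y"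
  shows "y \<in> WW F"
proof (cases x)
  case (Inl p)
  then have p: "p \<in> verts T" "p \<noteq> u'" "p \<noteq> u" using x xu by auto
  show ?thesis
  proof (cases y)
    case (Inl q)
    then have "{p, q} \<in> edges T" using a \<open>x = Inl p\<close> by (simp add: adj_sub)
    then show ?thesis using Inl edgeV edge_not_u' p by auto
  next
    case (Inr e)
    then have "e \<in> F" using a \<open>x = Inl p\<close> by (simp add: adj_sub)
    then show ?thesis using Inr by simp
  qed
next
  case (Inr e)
  then have e: "e \<in> F" using x by simp
  show ?thesis
  proof (cases y)
    case (Inl q)
    then have "q \<in> e" using a \<open>x = Inr e\<close> by (simp add: adj_sub)
    then show ?thesis using Inl nb_u'_free[OF F e] by simp
  next
    case (Inr e')
    then show ?thesis using a \<open>x = Inr e\<close> by (simp add: adj_sub)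
  qed
qed

lemma adjF_u:
  assumes F: "F \<subseteq> E1" and a: "adj (subdivide T F) (Inl u) y"
  shows "y \<in> insert (Inl u') (WW F)"
proof (cases y)
  case (Inl q)
  then have "{u, q} \<in> edges T" using a by (simp add: adj_sub)
  then show ?thesis using Inl edgeV by auto
next
  case (Inr e)
  then have "e \<in> F" using a by (simp add: adj_sub)
  then show ?thesis using Inr by simp
qed

lemma adjF_u':
  assumes F: "F \<subseteq> E1"
  shows "adj (subdivide T F) (Inl u') y \<longleftrightarrow> y = Inl u"
proof (cases y)
  case (Inl q)
  have "{u', q} \<in> edges T - F \<longleftrightarrow> q = u"
  proof
    assume "{u', q} \<in> edges T - F"
    then have "adj T u' q" unfolding adj_def by simp
    then show "q = u" by (rule leafnb)
  next
    assume "q = u"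
    then have "{u', q} = {u, u'}" by auto
    then show "{u', q} \<in> edges T - F" using e_uu' uu'_notin F by auto
  qed
  then show ?thesis using Inl by (simp add: adj_sub)
next
  case (Inr e)
  have "\<not> (e \<in> F \<and> u' \<in> e)" using nb_u'_free[OF F] by blast
  then show ?thesis using Inr by (simp add: adj_sub)
qed

lemma vert_nb: "a \<in> verts T \<Longrightarrow> a \<noteq> u \<Longrightarrow> \<exists>b. {a, b} \<in> edges T"
proof -
  assume a: "a \<in> verts T" "a \<noteq> u"
  have "(a, u) \<in> {(x, y). {x, y} \<in> edges T}\<^sup>*" using tree_reach[OF tree a(1) uV(1)] .
  then show ?thesis
  proof (cases rule: converse_rtranclE)
    case base then show ?thesis using a by simp
  next
    case (step c) then show ?thesis by blast
  qed
qed

lemma u_nb: "\<exists>y. adj T u y \<and> y \<noteq> u'"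
proof -
  have "\<exists>F. increases_gamma_t T F" using cl unfolding class3_def by blast
  then have ex: "\<exists>k F. increases_gamma_t T F \<and> card F = k" by blast
  have "\<exists>F. increases_gamma_t T F \<and> card F = sd_gamma_t T"
    unfolding sd_gamma_t_def by (rule LeastI_ex) (rule ex)
  then obtain F where Fi: "increases_gamma_t T F" "card F = sd_gamma_t T" by blast
  have F: "F \<subseteq> edges T" "card F = 3"
    using Fi cl unfolding class3_def increases_gamma_t_def by simp_all
  have "3 \<le> card (edges T)" using card_mono[OF finE F(1)] F(2) by simp
  moreover have "card (edges T) = card (verts T) - 1" using tree unfolding is_tree_def by simp
  ultimately have c4: "4 \<le> card (verts T)" by simp
  have "card (verts T - {u, u'}) = card (verts T) - 2" using uV finV by (simp add: card_Diff_subset)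
  then have "card (verts T - {u, u'}) \<noteq> 0" using c4 by simp
  then obtain x where x: "x \<in> verts T - {u, u'}" by (metis card.empty ex_in_conv)
  have "(u, x) \<in> {(a, b). adj T a b}\<^sup>*"
    using tree x uV unfolding is_tree_def connected_graph_def by blast
  then have "(\<exists>y. adj T u y \<and> y \<noteq> u') \<or> x \<in> {u, u'}"
  proof (induction rule: rtrancl_induct)
    case base then show ?case by simp
  next
    case (step a b)
    have ab: "adj T a b" using step(2) by simp
    show ?case
    proof (cases "\<exists>y. adj T u y \<and> y \<noteq> u'")
      case True then show ?thesis by blast
    next
      case False
      then have "a \<in> {u, u'}" using step(3) by blast
      then show ?thesis
      proof
        assume "a = u" then show ?thesis using ab False by blast
      next
        assume "a \<in> {u'}" then have "b = u" using ab leafnb by blast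
        then show ?thesis by simp
      qed
    qed
  qed
  then show ?thesis using x by blast
qed

lemma nbrF:
  assumes F: "F \<subseteq> E1" and x: "x \<in> WW F"
  shows "\<exists>y\<in>WW F. adj (subdivide T F) x y"
proof (cases x)
  case (Inl a)
  then have a: "a \<in> verts T" "a \<noteq> u'" using x by auto
  obtain b where b: "{a, b} \<in> edges T" "b \<noteq> u'"
  proof (cases "a = u")
    case True
    then obtain y where "adj T u y" "y \<noteq> u'" using u_nb by blast
    then show ?thesis using that True unfolding adj_def by blast
  next
    case False
    then obtain b where "{a, b} \<in> edges T" using vert_nb a by blast
    then show ?thesis using that edge_not_u' False by blast
  qed
  have bV: "b \<in> verts T" using edgeV b(1) by blast
  show ?thesis
  proof (cases "{a, b} \<in> F")
    case True
    then have "adj (subdivide T F) (Inl a) (Inr {a, b})" by (simp add: adj_sub)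
    moreover have "Inr {a, b} \<in> WW F" using True by simp
    ultimately show ?thesis using Inl by blast
  next
    case False
    then have "adj (subdivide T F) (Inl a) (Inl b)" using b by (simp add: adj_sub)
    moreover have "Inl b \<in> WW F" using bV b(2) by simp
    ultimately show ?thesis using Inl by blast
  qed
next
  case (Inr e)
  then have e: "e \<in> F" using x by simp
  obtain a b where ab: "a \<in> verts T" "a \<noteq> u'" "e = {a, b}" using E1_elem F e by blast
  have "adj (subdivide T F) (Inr e) (Inl a)" using e ab by (simp add: adj_sub)
  moreover have "Inl a \<in> WW F" using ab by simp
  ultimately show ?thesis using Inr by blast
qed

lemma rootedF: "F \<subseteq> E1 \<Longrightarrow> rooted (subdivide T F) (WW F) (Inl u)"
  apply (rule rooted.intro)
  using finWW E1_fin apply blast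
  using uV apply simp
  using nbrF apply blast
  done

lemma vertsF: "verts (subdivide T F) = insert (Inl u') (WW F)"
  unfolding verts_subdivide WW_def using uV(2) by auto

lemma pendF:
  assumes F: "F \<subseteq> E1"
  shows "pend (subdivide T F) (WW F) (Inl u) (Inl u')"
proof (rule pend.intro)
  show "rooted (subdivide T F) (WW F) (Inl u)" using rootedF[OF F] .
  show "pend_axioms (subdivide T F) (WW F) (Inl u) (Inl u')"
  proof (rule pend_axioms.intro)
    show "Inl u' \<notin> WW F" by simp
    show "verts (subdivide T F) = insert (Inl u') (WW F)" by (rule vertsF)
    show "\<forall>y. adj (subdivide T F) (Inl u') y = (y = Inl u)" using adjF_u'[OF F] by simp
    show "\<forall>x\<in>WW F - {Inl u}. \<forall>y. adj (subdivide T F) x y \<longrightarrow> y \<in> WW F"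
    proof (intro ballI allI impI)
      fix x y assume h: "x \<in> WW F - {Inl u}" "adj (subdivide T F) x y"
      then have "x \<in> WW F" "x \<noteq> Inl u" by auto
      then show "y \<in> WW F" using adjF_closed[OF F _ _ h(2)] by blast
    qed
    show "\<forall>y. adj (subdivide T F) (Inl u) y \<longrightarrow> y \<in> insert (Inl u') (WW F)"
      using adjF_u[OF F] by blast
  qed
qed

end


context side begin

abbreviation "G2 F \<equiv> subdivide T (insert {u, u'} F)"

lemma not_uu'_in: "F \<subseteq> E1 \<Longrightarrow> {u, u'} \<notin> F"
  using uu'_notin by blast

lemma pair_ne_uu': "a \<noteq> u' \<Longrightarrow> b \<noteq> u' \<Longrightarrow> {a, b} \<noteq> {u, u'}"
  by (metis insertCI insertE singletonD)

lemma adjF2_eq: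
  assumes F: "F \<subseteq> E1" and x: "x \<in> WW F" and y: "y \<in> WW F"
  shows "adj (G2 F) x y = adj (subdivide T F) x y"
proof (cases x)
  case (Inl a)
  then have a: "a \<noteq> u'" using x by simp
  show ?thesis
  proof (cases y)
    case (Inl b)
    then have b: "b \<noteq> u'" using y by simp
    have "{a, b} \<noteq> {u, u'}" using pair_ne_uu'[OF a b] .
    then show ?thesis using \<open>x = Inl a\<close> Inl by (simp add: adj_sub)
  next
    case (Inr e)
    then have "e \<in> F" using y by simp
    then show ?thesis using \<open>x = Inl a\<close> Inr by (simp add: adj_sub)
  qed
next
  case (Inr e)
  then have e: "e \<in> F" using x by simp
  show ?thesis
  proof (cases y)
    case (Inl b)
    then show ?thesis using \<open>x = Inr e\<close> e by (simp add: adj_sub)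
  next
    case (Inr e')
    then show ?thesis using \<open>x = Inr e\<close> by (simp add: adj_sub)
  qed
qed

lemma adjF2_p:
  assumes F: "F \<subseteq> E1"
  shows "adj (G2 F) (Inl u') y \<longleftrightarrow> y = Inr {u, u'}"
proof (cases y)
  case (Inl b)
  have "\<not> ({u', b} \<in> edges T - insert {u, u'} F)"
  proof
    assume h: "{u', b} \<in> edges T - insert {u, u'} F"
    then have "{u', b} \<in> edges T" by simp
    then have "{u', b} = {u, u'}" using edge_u' by simp
    then show False using h by simp
  qed
  then show ?thesis using Inl by (simp add: adj_sub)
next
  case (Inr e)
  have "(e \<in> insert {u, u'} F \<and> u' \<in> e) \<longleftrightarrow> e = {u, u'}"
    using nb_u'_free[OF F] by auto
  then show ?thesis using Inr by (simp add: adj_sub)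
qed

lemma adjF2_w:
  shows "adj (G2 F) (Inr {u, u'}) y \<longleftrightarrow> (y = Inl u \<or> y = Inl u')"
proof (cases y)
  case (Inl b)
  then show ?thesis by (simp add: adj_sub)
next
  case (Inr e)
  then show ?thesis by (simp add: adj_sub)
qed

lemma adjF2_closed:
  assumes F: "F \<subseteq> E1" and x: "x \<in> WW F" and xu: "x \<noteq> Inl u" and a: "adj (G2 F) x y"
  shows "y \<in> WW F"
proof (cases x)
  case (Inl p)
  then have p: "p \<in> verts T" "p \<noteq> u'" "p \<noteq> u" using x xu by auto
  show ?thesis
  proof (cases y)
    case (Inl q)
    then have "{p, q} \<in> edges T" using a \<open>x = Inl p\<close> by (simp add: adj_sub)
    then have "q \<in> verts T" "q \<noteq> u'" using edgeV edge_not_u' p(3) by blast+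
    then show ?thesis using Inl by simp
  next
    case (Inr e)
    then have h: "e \<in> insert {u, u'} F" "p \<in> e" using a \<open>x = Inl p\<close> by (simp_all add: adj_sub)
    have "e \<noteq> {u, u'}" using h(2) p by auto
    then have "e \<in> F" using h(1) by simp
    then show ?thesis using Inr by simp
  qed
next
  case (Inr e)
  then have e: "e \<in> F" using x by simp
  show ?thesis
  proof (cases y)
    case (Inl q)
    then have "q \<in> e" using a \<open>x = Inr e\<close> by (simp add: adj_sub)
    then show ?thesis using Inl nb_u'_free[OF F e] by simp
  next
    case (Inr e')
    then show ?thesis using a \<open>x = Inr e\<close> by (simp add: adj_sub)
  qed
qed

lemma adjF2_u:
  assumes F: "F \<subseteq> E1" and a: "adj (G2 F) (Inl u) y"
  shows "y \<in> insert (Inr {u, u'}) (WW F)"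
proof (cases y)
  case (Inl q)
  then have h: "{u, q} \<in> edges T" "{u, q} \<notin> insert {u, u'} F" using a by (simp_all add: adj_sub)
  have "q \<noteq> u'" using h(2) by auto
  moreover have "q \<in> verts T" using edgeV h(1) by blast
  ultimately show ?thesis using Inl by simp
next
  case (Inr e)
  then have "e \<in> insert {u, u'} F" using a by (simp add: adj_sub)
  then show ?thesis using Inr by auto
qed

lemma vertsF2: "verts (G2 F) = insert (Inr {u, u'}) (insert (Inl u') (WW F))"
  unfolding verts_subdivide WW_def using uV(2) by auto

lemma rootedF2: "F \<subseteq> E1 \<Longrightarrow> rooted (G2 F) (WW F) (Inl u)"
proof (rule rooted.intro)
  assume F: "F \<subseteq> E1"
  show "finite (WW F)" using finWW E1_fin[OF F] by blast
  show "Inl u \<in> WW F" using uV by simp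
  show "\<forall>x\<in>WW F. \<exists>y\<in>WW F. adj (G2 F) x y"
  proof
    fix x assume x: "x \<in> WW F"
    then obtain y where y: "y \<in> WW F" "adj (subdivide T F) x y" using nbrF[OF F x] by blast
    then have "adj (G2 F) x y" using adjF2_eq[OF F x y(1)] by simp
    then show "\<exists>y\<in>WW F. adj (G2 F) x y" using y(1) by blast
  qed
qed

lemma pend2F:
  assumes F: "F \<subseteq> E1"
  shows "pend2 (G2 F) (WW F) (Inl u) (Inr {u, u'}) (Inl u')"
proof (rule pend2.intro)
  show "rooted (G2 F) (WW F) (Inl u)" using rootedF2[OF F] .
  show "pend2_axioms (G2 F) (WW F) (Inl u) (Inr {u, u'}) (Inl u')"
  proof (rule pend2_axioms.intro)
    show "Inr {u, u'} \<notin> WW F" using not_uu'_in[OF F] by simp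
    show "Inl u' \<notin> WW F" by simp
    show "Inr {u, u'} \<noteq> Inl u'" by simp
    show "verts (G2 F) = insert (Inr {u, u'}) (insert (Inl u') (WW F))" by (rule vertsF2)
    show "\<forall>y. adj (G2 F) (Inl u') y = (y = Inr {u, u'})" using adjF2_p[OF F] by simp
    show "\<forall>y. adj (G2 F) (Inr {u, u'}) y = (y = Inl u \<or> y = Inl u')" using adjF2_w by simp
    show "\<forall>x\<in>WW F - {Inl u}. \<forall>y. adj (G2 F) x y \<longrightarrow> y \<in> WW F"
    proof (intro ballI allI impI)
      fix x y assume h: "x \<in> WW F - {Inl u}" "adj (G2 F) x y"
      then have "x \<in> WW F" "x \<noteq> Inl u" by auto
      then show "y \<in> WW F" using adjF2_closed[OF F _ _ h(2)] by blast
    qed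
    show "\<forall>y. adj (G2 F) (Inl u) y \<longrightarrow> y \<in> insert (Inr {u, u'}) (WW F)"
      using adjF2_u[OF F] by blast
  qed
qed

definition PA where "PA F = par (subdivide T F) (WW F) (Inl u) True True"
definition PB where "PB F = par (subdivide T F) (WW F) (Inl u) True False"
definition PC where "PC F = par (subdivide T F) (WW F) (Inl u) False True"
definition PD where "PD F = par (subdivide T F) (WW F) (Inl u) False False"

lemma gammaF: "F \<subseteq> E1 \<Longrightarrow> gamma_t (subdivide T F) = PA F"
  unfolding PA_def using pend.gamma_eq[OF pendF] by blast

lemma gamma2F: "F \<subseteq> E1 \<Longrightarrow> gamma_t (G2 F) = PB F + 1"
proof -
  assume F: "F \<subseteq> E1"
  have "gamma_t (G2 F) = par (G2 F) (WW F) (Inl u) True False + 1"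
    using pend2.gamma_eq[OF pend2F[OF F]] .
  moreover have "par (G2 F) (WW F) (Inl u) True False = PB F"
    unfolding PB_def using uV by (intro par_cong) (simp_all add: adjF2_eq[OF F])
  ultimately show ?thesis by simp
qed

lemma gamma0: "gamma_t T = PA {}"
  using gamma_sub_empty[of T] gammaF[of "{}"] by simp

lemma rel:
  assumes F: "F \<subseteq> E1"
  shows "PA F \<le> PB F + 1" "PB F \<le> PD F + 1" "PA F \<le> PC F + 1" "PB F \<le> PA F"
    "PD F \<le> PC F" "PD F \<le> PB F" "1 \<le> PB F" "PC F \<le> PA F"
proof -
  interpret R: rooted "subdivide T F" "WW F" "Inl u" using rootedF[OF F] .
  show "PA F \<le> PB F + 1" unfolding PA_def PB_def by (rule R.A_le_B)
  show "PB F \<le> PD F + 1" unfolding PB_def PD_def by (rule R.B_le_D)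
  show "PA F \<le> PC F + 1" unfolding PA_def PC_def by (rule R.A_le_C)
  show "PB F \<le> PA F" unfolding PA_def PB_def by (rule R.mono) simp_all
  show "PD F \<le> PC F" unfolding PC_def PD_def by (rule R.mono) simp_all
  show "PD F \<le> PB F" unfolding PB_def PD_def by (rule R.mono) simp_all
  show "1 \<le> PB F" unfolding PB_def by (rule R.B_pos)
  show "PC F \<le> PA F" unfolding PA_def PC_def by (rule R.mono) simp_all
qed

lemma sd3: "sd_gamma_t T = 3" using cl unfolding class3_def by simp

lemma noinc: "F \<subseteq> edges T \<Longrightarrow> card F < 3 \<Longrightarrow> gamma_t (subdivide T F) \<le> gamma_t T"
proof (rule ccontr)
  assume F: "F \<subseteq> edges T" and c: "card F < 3" and n: "\<not> gamma_t (subdivide T F) \<le> gamma_t T"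
  then have "increases_gamma_t T F" unfolding increases_gamma_t_def by simp
  then have "sd_gamma_t T \<le> card F" unfolding sd_gamma_t_def by (intro Least_le) blast
  then show False using sd3 c by simp
qed

lemma exinc: "\<exists>F. F \<subseteq> edges T \<and> card F = 3 \<and> gamma_t T < gamma_t (subdivide T F)"
proof -
  have "\<exists>F. increases_gamma_t T F" using cl unfolding class3_def by blast
  then have ex: "\<exists>k F. increases_gamma_t T F \<and> card F = k" by blast
  have "\<exists>F. increases_gamma_t T F \<and> card F = sd_gamma_t T"
    unfolding sd_gamma_t_def by (rule LeastI_ex) (rule ex)
  then obtain F where Fi: "increases_gamma_t T F" "card F = sd_gamma_t T" by blast
  then show ?thesis using sd3 unfolding increases_gamma_t_def by auto
qed

lemma S1: "PA {} = PB {} + 1"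
proof -
  have "gamma_t (G2 {}) \<le> gamma_t T"
    by (rule noinc) (use e_uu' in simp_all)
  then have "PB {} + 1 \<le> PA {}" using gamma2F[of "{}"] gamma0 by simp
  then show ?thesis using rel(1)[of "{}"] by simp
qed

lemma S2: "F \<subseteq> E1 \<Longrightarrow> card F \<le> 2 \<Longrightarrow> PA F \<le> PA {}"
proof -
  assume F: "F \<subseteq> E1" and c: "card F \<le> 2"
  have "gamma_t (subdivide T F) \<le> gamma_t T"
    by (rule noinc) (use F E1_sub c in auto)
  then show ?thesis using gammaF[OF F] gamma0 by simp
qed

lemma S3: "e \<in> E1 \<Longrightarrow> PB {e} \<le> PB {}"
proof -
  assume e: "e \<in> E1"
  have ne: "e \<noteq> {u, u'}" using e uu'_notin by blast
  have "gamma_t (G2 {e}) \<le> gamma_t T"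
  proof (rule noinc)
    show "insert {u, u'} {e} \<subseteq> edges T" using e E1_sub e_uu' by blast
    show "card (insert {u, u'} {e}) < 3" using ne by simp
  qed
  then show ?thesis using gamma2F[of "{e}"] e gamma0 S1 by simp
qed

lemma S5: "(\<exists>F. F \<subseteq> E1 \<and> card F = 3 \<and> PB {} + 2 \<le> PA F) \<or> (\<exists>F. F \<subseteq> E1 \<and> card F = 2 \<and> PB {} + 1 \<le> PB F)"
proof -
  obtain F where F: "F \<subseteq> edges T" "card F = 3" "gamma_t T < gamma_t (subdivide T F)" using exinc by blast
  show ?thesis
  proof (cases "{u, u'} \<in> F")
    case True
    define F' where "F' = F - {{u, u'}}"
    have F'1: "F' \<subseteq> E1"
    proof
      fix e assume e: "e \<in> F'"
      then have "e \<in> edges T" "e \<noteq> {u, u'}" using F(1) F'_def by auto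
      then have "u' \<notin> e" using edge_u' by blast
      then show "e \<in> E1" using \<open>e \<in> edges T\<close> unfolding E1_def by simp
    qed
    have eq: "insert {u, u'} F' = F" using True F'_def by auto
    have finF: "finite F" using F(1) finE finite_subset by blast
    have "card F' = 2" using F(2) True finF F'_def by simp
    moreover have "PB {} + 1 \<le> PB F'"
      using F(3) gamma2F[OF F'1] gamma0 S1 eq by simp
    ultimately show ?thesis using F'1 by blast
  next
    case False
    have F1: "F \<subseteq> E1"
    proof
      fix e assume e: "e \<in> F"
      then have "e \<in> edges T" "e \<noteq> {u, u'}" using F(1) False by auto
      then have "u' \<notin> e" using edge_u' by blast
      then show "e \<in> E1" using \<open>e \<in> edges T\<close> unfolding E1_def by simp
    qed
    have "PB {} + 2 \<le> PA F" using F(3) gammaF[OF F1] gamma0 S1 by simp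
    then show ?thesis using F1 F(2) by blast
  qed
qed

end


context rooted begin

lemma exch:
  assumes S: "valid G W r True False S" and S': "valid G W r True False S'"
    and K: "K \<subseteq> W - {r}" and cl: "\<forall>x\<in>K. \<forall>t\<in>W-{r}. adj G x t \<longrightarrow> t \<in> K"
  shows "valid G W r True False ((S - K) \<union> (S' \<inter> K))"
  unfolding valid_def
proof (intro conjI impI)
  have SW: "S \<subseteq> W" "S' \<subseteq> W" using S S' unfolding valid_def by auto
  show "S - K \<union> S' \<inter> K \<subseteq> W" using SW by blast
  have "r \<in> S" using S unfolding valid_def by simp
  moreover have "r \<notin> K" using K by blast
  ultimately show "r \<in> S - K \<union> S' \<inter> K" by blast
  show "dom_by G (S - K \<union> S' \<inter> K) (W - {r})"
    unfolding dom_by_def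
  proof
    fix x assume x: "x \<in> W - {r}"
    show "\<exists>s\<in>S - K \<union> S' \<inter> K. adj G x s"
    proof (cases "x \<in> K")
      case True
      obtain s where s: "s \<in> S'" "adj G x s" using S' x unfolding valid_def dom_by_def by blast
      show ?thesis
      proof (cases "s = r")
        case True
        then show ?thesis using s \<open>r \<in> S\<close> \<open>r \<notin> K\<close> by blast
      next
        case False
        then have "s \<in> W - {r}" using s SW by blast
        then have "s \<in> K" using cl \<open>x \<in> K\<close> s(2) by blast
        then show ?thesis using s by blast
      qed
    next
      case False
      obtain s where s: "s \<in> S" "adj G x s" using S x unfolding valid_def dom_by_def by blast
      have "s \<notin> K"
      proof
        assume sK: "s \<in> K"
        have "adj G s x" using s(2) adj_sym by metis
        then have "x \<in> K" using cl sK x by blast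
        then show False using False by simp
      qed
      then show ?thesis using s by blast
    qed
  qed
  show "dom_by G (S - K \<union> S' \<inter> K) {r}" if "False" using that by simp
qed

lemma card_split: "finite A \<Longrightarrow> card A = card (A - K) + card (A \<inter> K)"
proof -
  assume f: "finite A"
  have "A = (A - K) \<union> (A \<inter> K)" by blast
  moreover have "(A - K) \<inter> (A \<inter> K) = {}" by blast
  ultimately show ?thesis using f card_Un_disjoint[of "A - K" "A \<inter> K"] by simp
qed

lemma exch_card:
  assumes S: "valid G W r True False S" and S': "valid G W r True False S'"
    and c': "card S' \<le> pB"
    and K: "K \<subseteq> W - {r}" and cl: "\<forall>x\<in>K. \<forall>t\<in>W-{r}. adj G x t \<longrightarrow> t \<in> K"
  shows "card ((S - K) \<union> (S' \<inter> K)) \<le> card S"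
proof -
  have fS: "finite S" "finite S'" using valid_fin S S' by auto
  have v2: "valid G W r True False ((S' - K) \<union> (S \<inter> K))" using exch[OF S' S K cl] .
  have d1: "(S' - K) \<inter> (S \<inter> K) = {}" by blast
  have d2: "(S - K) \<inter> (S' \<inter> K) = {}" by blast
  have "pB \<le> card ((S' - K) \<union> (S \<inter> K))" using le[OF v2] .
  also have "\<dots> = card (S' - K) + card (S \<inter> K)" using d1 fS by (simp add: card_Un_disjoint)
  finally have a: "pB \<le> card (S' - K) + card (S \<inter> K)" .
  have b: "card S' = card (S' - K) + card (S' \<inter> K)" using card_split fS(2) by blast
  have c: "card S = card (S - K) + card (S \<inter> K)" using card_split fS(1) by blast
  have "card ((S - K) \<union> (S' \<inter> K)) = card (S - K) + card (S' \<inter> K)" using d2 fS by (simp add: card_Un_disjoint)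
  then show ?thesis using a b c c' by linarith
qed

end


context side begin

definition Ru :: "('a \<times> 'a) set" where "Ru = {(a, b). {a, b} \<in> edges T \<and> a \<noteq> u \<and> b \<noteq> u}"
definition comp :: "'a \<Rightarrow> 'a set" where "comp y = {x. (y, x) \<in> Ru\<^sup>*}"
definition Nb :: "'a set" where "Nb = {y. {u, y} \<in> edges T \<and> y \<noteq> u'}"

lemma Ru_sym: "(a, b) \<in> Ru \<Longrightarrow> (b, a) \<in> Ru"
  unfolding Ru_def by (simp add: insert_commute)

lemma Ru_star_sym: "(a, b) \<in> Ru\<^sup>* \<Longrightarrow> (b, a) \<in> Ru\<^sup>*"
proof (induction rule: rtrancl_induct)
  case base then show ?case by simp
next
  case (step b c)
  have "(c, b) \<in> Ru" using Ru_sym[OF step(2)] .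
  then show ?case using step(3) by (rule converse_rtrancl_into_rtrancl)
qed

lemma Nb_props: "y \<in> Nb \<Longrightarrow> y \<in> verts T \<and> y \<noteq> u \<and> y \<noteq> u'"
proof -
  assume y: "y \<in> Nb"
  then have e: "{u, y} \<in> edges T" "y \<noteq> u'" unfolding Nb_def by auto
  then show ?thesis using edge_in[OF tree e(1)] by auto
qed

lemma c1: "y \<in> Nb \<Longrightarrow> x \<in> comp y \<Longrightarrow> x \<in> verts T \<and> x \<noteq> u \<and> x \<noteq> u'"
proof -
  assume y: "y \<in> Nb" and x: "x \<in> comp y"
  have "(y, x) \<in> Ru\<^sup>*" using x unfolding comp_def by simp
  then show ?thesis
  proof (induction rule: rtrancl_induct)
    case base then show ?case using Nb_props[OF y] by simp
  next
    case (step a b)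
    then have h: "{a, b} \<in> edges T" "a \<noteq> u" "b \<noteq> u" unfolding Ru_def by auto
    have "b \<in> verts T" using edgeV h(1) by blast
    moreover have "b \<noteq> u'" using edge_not_u'[OF h(1) h(2)] .
    ultimately show ?case using h(3) by simp
  qed
qed

lemma c2: "y \<in> Nb \<Longrightarrow> x \<in> comp y \<Longrightarrow> {x, t} \<in> edges T \<Longrightarrow> t \<noteq> u \<Longrightarrow> t \<in> comp y"
proof -
  assume y: "y \<in> Nb" and x: "x \<in> comp y" and e: "{x, t} \<in> edges T" and t: "t \<noteq> u"
  have "x \<noteq> u" using c1[OF y x] by simp
  then have "(x, t) \<in> Ru" unfolding Ru_def using e t by simp
  moreover have "(y, x) \<in> Ru\<^sup>*" using x unfolding comp_def by simp
  ultimately show ?thesis unfolding comp_def by (simp add: rtrancl_into_rtrancl)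
qed

lemma c3: "y \<in> Nb \<Longrightarrow> x \<in> comp y \<Longrightarrow> {x, u} \<in> edges T \<Longrightarrow> x = y"
proof (rule ccontr)
  assume y: "y \<in> Nb" and x: "x \<in> comp y" and e: "{x, u} \<in> edges T" and ne: "x \<noteq> y"
  have e1: "{u, y} \<in> edges T" using y unfolding Nb_def by simp
  have e2: "{u, x} \<in> edges T" using e by (simp add: insert_commute)
  have p: "(y, x) \<in> Ru\<^sup>*" using x unfolding comp_def by simp
  show False using tree_no_cycle[OF tree e1 e2 ne[symmetric]] p unfolding Ru_def by simp
qed

lemma c4: "y \<in> Nb \<Longrightarrow> y' \<in> Nb \<Longrightarrow> y \<noteq> y' \<Longrightarrow> x \<in> comp y \<Longrightarrow> x \<in> comp y' \<Longrightarrow> False"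
proof -
  assume y: "y \<in> Nb" and y': "y' \<in> Nb" and ne: "y \<noteq> y'" and x: "x \<in> comp y" and x': "x \<in> comp y'"
  have e1: "{u, y} \<in> edges T" using y unfolding Nb_def by simp
  have e2: "{u, y'} \<in> edges T" using y' unfolding Nb_def by simp
  have "(y, x) \<in> Ru\<^sup>*" using x unfolding comp_def by simp
  moreover have "(x, y') \<in> Ru\<^sup>*" using x' Ru_star_sym unfolding comp_def by simp
  ultimately have "(y, y') \<in> Ru\<^sup>*" by (rule rtrancl_trans)
  then show False using tree_no_cycle[OF tree e1 e2 ne] unfolding Ru_def by simp
qed

lemma c5: "x \<in> verts T \<Longrightarrow> x \<noteq> u \<Longrightarrow> x \<noteq> u' \<Longrightarrow> \<exists>y\<in>Nb. x \<in> comp y"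
proof -
  assume x: "x \<in> verts T" "x \<noteq> u" "x \<noteq> u'"
  have "(u, x) \<in> {(a, b). {a, b} \<in> edges T}\<^sup>*" using tree_reach[OF tree uV(1) x(1)] .
  then have "x = u \<or> x = u' \<or> (\<exists>y\<in>Nb. x \<in> comp y)"
  proof (induction rule: rtrancl_induct)
    case base then show ?case by simp
  next
    case (step a b)
    have ab: "{a, b} \<in> edges T" using step(2) by simp
    from step(3) consider "a = u" | "a = u'" | "\<exists>y\<in>Nb. a \<in> comp y" by blast
    then show ?case
    proof cases
      case 1
      show ?thesis
      proof (cases "b = u'")
        case True then show ?thesis by simp
      next
        case False
        then have "b \<in> Nb" using ab 1 unfolding Nb_def by simp
        moreover have "b \<in> comp b" unfolding comp_def by simp
        ultimately show ?thesis by blast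
      qed
    next
      case 2
      then have "adj T u' b" using ab unfolding adj_def by simp
      then have "b = u" by (rule leafnb)
      then show ?thesis by simp
    next
      case 3
      then obtain y where y: "y \<in> Nb" "a \<in> comp y" by blast
      show ?thesis
      proof (cases "b = u")
        case True then show ?thesis by simp
      next
        case False
        then have "b \<in> comp y" using c2[OF y ab] by simp
        then show ?thesis using y(1) by blast
      qed
    qed
  qed
  then show ?thesis using x by simp
qed

lemma finNb: "finite Nb"
proof (rule finite_subset[of Nb "verts T"])
  show "Nb \<subseteq> verts T" using Nb_props by blast
  show "finite (verts T)" using finV .
qed

end


context side begin

abbreviation "G0 \<equiv> subdivide T ({} :: 'a set set)"
abbreviation "W0 \<equiv> WW {}"

definition Kc :: "'a \<Rightarrow> ('a + 'a set) set" where "Kc y = Inl ` comp y"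

lemma W0_cases: "x \<in> W0 \<Longrightarrow> \<exists>a. x = Inl a \<and> a \<in> verts T \<and> a \<noteq> u'"
  using WW_cases by auto

lemma Kc_sub: "y \<in> Nb \<Longrightarrow> Kc y \<subseteq> W0 - {Inl u}"
  unfolding Kc_def using c1 by auto

lemma Kc_y: "y \<in> Nb \<Longrightarrow> Inl y \<in> Kc y"
  unfolding Kc_def comp_def by simp

lemma Kc_cl: "y \<in> Nb \<Longrightarrow> \<forall>x\<in>Kc y. \<forall>t\<in>W0 - {Inl u}. adj G0 x t \<longrightarrow> t \<in> Kc y"
proof (intro ballI impI)
  fix x t assume y: "y \<in> Nb" and x: "x \<in> Kc y" and t: "t \<in> W0 - {Inl u}" and a: "adj G0 x t"
  obtain p where p: "x = Inl p" "p \<in> comp y" using x unfolding Kc_def by blast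
  obtain q where q: "t = Inl q" "q \<noteq> u" using t W0_cases by blast
  have "{p, q} \<in> edges T" using a p(1) q(1) by (simp add: adj_sub)
  then have "q \<in> comp y" using c2[OF y p(2) _ q(2)] by simp
  then show "t \<in> Kc y" using q(1) unfolding Kc_def by simp
qed

lemma Kc_u: "y \<in> Nb \<Longrightarrow> x \<in> Kc y \<Longrightarrow> adj G0 x (Inl u) \<Longrightarrow> x = Inl y"
proof -
  assume y: "y \<in> Nb" and x: "x \<in> Kc y" and a: "adj G0 x (Inl u)"
  obtain p where p: "x = Inl p" "p \<in> comp y" using x unfolding Kc_def by blast
  have "{p, u} \<in> edges T" using a p(1) by (simp add: adj_sub)
  then have "p = y" using c3[OF y p(2)] by simp
  then show ?thesis using p(1) by simp
qed

lemma Kc_disj: "y \<in> Nb \<Longrightarrow> y' \<in> Nb \<Longrightarrow> y \<noteq> y' \<Longrightarrow> t \<in> Kc y \<Longrightarrow> t \<notin> Kc y'"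
proof
  assume y: "y \<in> Nb" and y': "y' \<in> Nb" and ne: "y \<noteq> y'" and t: "t \<in> Kc y" and t': "t \<in> Kc y'"
  obtain p where p: "t = Inl p" "p \<in> comp y" using t unfolding Kc_def by blast
  have "p \<in> comp y'" using t' p(1) unfolding Kc_def by auto
  then show False using c4[OF y y' ne p(2)] by simp
qed

lemma Sy:
  assumes y: "y \<in> Nb"
  shows "\<exists>S. valid G0 W0 (Inl u) True False S \<and> card S \<le> PB {} \<and> (\<exists>t\<in>S. t \<noteq> Inl u \<and> adj G0 (Inl y) t)"
proof -
  define e where "e = {u, y}"
  have yp: "y \<in> verts T" "y \<noteq> u" "y \<noteq> u'" using Nb_props[OF y] by auto
  have eE: "e \<in> edges T" using y unfolding Nb_def e_def by simp
  have "u' \<notin> e" unfolding e_def using uV(3)[symmetric] yp(3)[symmetric] by simp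
  then have eE1: "e \<in> E1" using eE unfolding E1_def by simp
  have E1e: "{e} \<subseteq> E1" using eE1 by simp
  interpret R1: rooted "subdivide T {e}" "WW {e}" "Inl u" using rootedF[OF E1e] .
  interpret R0: rooted G0 W0 "Inl u" using rootedF[of "{}"] by simp
  obtain S1 where S1: "valid (subdivide T {e}) (WW {e}) (Inl u) True False S1" "card S1 = PB {e}"
    using R1.wit unfolding PB_def by blast
  have cS1: "card S1 \<le> PB {}" using S1(2) S3[OF eE1] by simp
  have PBpos: "1 \<le> PB {}" using rel(7)[of "{}"] by simp
  have S1W: "S1 \<subseteq> WW {e}" and uS1: "Inl u \<in> S1" using S1(1) unfolding valid_def by auto
  have dom1: "\<exists>s\<in>S1. adj (subdivide T {e}) x s" if "x \<in> WW {e} - {Inl u}" for x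
    using S1(1) that unfolding valid_def dom_by_def by blast
  have WWe: "WW {e} = insert (Inr e) W0" unfolding WW_def by simp
  have adjLL: "adj G0 (Inl a) (Inl b)" if "adj (subdivide T {e}) (Inl a) (Inl b)" for a b
    using that by (simp add: adj_sub)
  have zS1: "Inr e \<notin> S1"
  proof
    assume zS: "Inr e \<in> S1"
    define S1' where "S1' = S1 - {Inr e}"
    have v: "valid G0 W0 (Inl u) True False S1'"
      unfolding valid_def
    proof (intro conjI impI)
      have "S1 \<subseteq> insert (Inr e) W0" using S1W unfolding WWe .
      then show "S1' \<subseteq> W0" unfolding S1'_def by blast
      show "Inl u \<in> S1'" using uS1 unfolding S1'_def by simp
      show "dom_by G0 S1' (W0 - {Inl u})"
        unfolding dom_by_def
      proof
        fix x assume x: "x \<in> W0 - {Inl u}"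
        then obtain a where a: "x = Inl a" "a \<in> verts T" "a \<noteq> u'" "a \<noteq> u" using W0_cases by blast
        have "x \<in> WW {e} - {Inl u}" using x WWe by blast
        then obtain s where s: "s \<in> S1" "adj (subdivide T {e}) x s" using dom1 by blast
        have "s \<in> WW {e}" using s(1) S1W by blast
        then consider "s = Inr e" | "s \<in> W0" using WWe by blast
        then show "\<exists>s\<in>S1'. adj G0 x s"
        proof cases
          case 1
          then have "a \<in> e" using s(2) a(1) by (simp add: adj_sub)
          then have "a = y" using a(4) unfolding e_def by simp
          then have "adj G0 x (Inl u)" using a(1) eE unfolding e_def by (simp add: adj_sub insert_commute)
          moreover have "Inl u \<in> S1'" using uS1 unfolding S1'_def by simp
          ultimately show ?thesis by blast
        next
          case 2
          then obtain b where b: "s = Inl b" using W0_cases by blast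
          then have "adj G0 x s" using adjLL s(2) a(1) by simp
          moreover have "s \<in> S1'" using s(1) b unfolding S1'_def by simp
          ultimately show ?thesis by blast
        qed
      qed
      show "dom_by G0 S1' {Inl u}" if "False" using that by simp
    qed
    have "PB {} \<le> card S1'" using R0.le[OF v] unfolding PB_def .
    moreover have "card S1' = card S1 - 1" unfolding S1'_def using zS by simp
    ultimately show False using cS1 PBpos by linarith
  qed
  have "S1 \<subseteq> insert (Inr e) W0" using S1W unfolding WWe .
  then have S1W0: "S1 \<subseteq> W0" using zS1 by blast
  have v: "valid G0 W0 (Inl u) True False S1"
    unfolding valid_def
  proof (intro conjI impI)
    show "S1 \<subseteq> W0" using S1W0 .
    show "Inl u \<in> S1" using uS1 .
    show "dom_by G0 S1 (W0 - {Inl u})"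
      unfolding dom_by_def
    proof
      fix x assume x: "x \<in> W0 - {Inl u}"
      then obtain a where a: "x = Inl a" using W0_cases by blast
      have "x \<in> WW {e} - {Inl u}" using x WWe by blast
      then obtain s where s: "s \<in> S1" "adj (subdivide T {e}) x s" using dom1 by blast
      obtain b where b: "s = Inl b" using s(1) S1W0 W0_cases by blast
      have "adj G0 x s" using adjLL s(2) a b by simp
      then show "\<exists>s\<in>S1. adj G0 x s" using s(1) by blast
    qed
    show "dom_by G0 S1 {Inl u}" if "False" using that by simp
  qed
  have "Inl y \<in> WW {e} - {Inl u}" using yp by simp
  then obtain s where s: "s \<in> S1" "adj (subdivide T {e}) (Inl y) s" using dom1 by blast
  obtain b where b: "s = Inl b" using s(1) S1W0 W0_cases by blast
  have h: "{y, b} \<in> edges T" "{y, b} \<noteq> e" using s(2) b by (simp_all add: adj_sub)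
  have "b \<noteq> u"
  proof
    assume "b = u"
    then have "{y, b} = e" unfolding e_def by (simp add: insert_commute[of y u "{}"])
    then show False using h(2) by simp
  qed
  then have "s \<noteq> Inl u" using b by simp
  moreover have "adj G0 (Inl y) s" using h(1) b by (simp add: adj_sub)
  ultimately show ?thesis using v cS1 s(1) by blast
qed

lemma S4: "PD {} + 1 \<le> PB {}"
proof -
  interpret R0: rooted G0 W0 "Inl u" using rootedF[of "{}"] by simp
  have inv: "finite M \<Longrightarrow> M \<subseteq> Nb \<Longrightarrow> \<exists>S. valid G0 W0 (Inl u) True False S \<and> card S \<le> PB {} \<and> (\<forall>y\<in>M. \<exists>t\<in>S. t \<noteq> Inl u \<and> adj G0 (Inl y) t)" for M
  proof (induction M rule: finite_induct)
    case empty
    obtain S where "valid G0 W0 (Inl u) True False S" "card S = PB {}" using R0.wit unfolding PB_def by blast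
    then show ?case by auto
  next
    case (insert y0 M)
    then obtain S where S: "valid G0 W0 (Inl u) True False S" "card S \<le> PB {}"
      "\<forall>y\<in>M. \<exists>t\<in>S. t \<noteq> Inl u \<and> adj G0 (Inl y) t" by blast
    have y0: "y0 \<in> Nb" using insert by simp
    obtain S0 where S0: "valid G0 W0 (Inl u) True False S0" "card S0 \<le> PB {}" "\<exists>t\<in>S0. t \<noteq> Inl u \<and> adj G0 (Inl y0) t"
      using Sy[OF y0] by blast
    define S' where "S' = (S - Kc y0) \<union> (S0 \<inter> Kc y0)"
    have v: "valid G0 W0 (Inl u) True False S'"
      unfolding S'_def using R0.exch[OF S(1) S0(1) Kc_sub[OF y0] Kc_cl[OF y0]] .
    have c: "card S' \<le> card S"
      unfolding S'_def using R0.exch_card[OF S(1) S0(1) _ Kc_sub[OF y0] Kc_cl[OF y0]] S0(2) unfolding PB_def by blast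
    have dom: "\<forall>y\<in>insert y0 M. \<exists>t\<in>S'. t \<noteq> Inl u \<and> adj G0 (Inl y) t"
    proof
      fix y assume yin: "y \<in> insert y0 M"
      show "\<exists>t\<in>S'. t \<noteq> Inl u \<and> adj G0 (Inl y) t"
      proof (cases "y = y0")
        case True
        obtain t where t: "t \<in> S0" "t \<noteq> Inl u" "adj G0 (Inl y0) t" using S0(3) by blast
        have "t \<in> W0" using t(1) S0(1) unfolding valid_def by blast
        then have "t \<in> Kc y0" using Kc_cl[OF y0] Kc_y[OF y0] t by blast
        then have "t \<in> S'" using t(1) unfolding S'_def by blast
        then show ?thesis using t True by blast
      next
        case False
        then have yM: "y \<in> M" using yin by simp
        have yN: "y \<in> Nb" using yM insert by blast
        obtain t where t: "t \<in> S" "t \<noteq> Inl u" "adj G0 (Inl y) t" using S(3) yM by blast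
        have "t \<in> W0" using t(1) S(1) unfolding valid_def by blast
        then have "t \<in> Kc y" using Kc_cl[OF yN] Kc_y[OF yN] t by blast
        then have "t \<notin> Kc y0" using Kc_disj[OF yN y0 False] by blast
        then have "t \<in> S'" using t(1) unfolding S'_def by blast
        then show ?thesis using t by blast
      qed
    qed
    show ?case using v c S(2) dom by (intro exI[of _ S']) simp
  qed
  obtain S where S: "valid G0 W0 (Inl u) True False S" "card S \<le> PB {}"
    "\<forall>y\<in>Nb. \<exists>t\<in>S. t \<noteq> Inl u \<and> adj G0 (Inl y) t"
    using inv[OF finNb] by blast
  have uS: "Inl u \<in> S" and SW: "S \<subseteq> W0" using S(1) unfolding valid_def by auto
  define D where "D = S - {Inl u}"
  have vD: "valid G0 W0 (Inl u) False False D"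
    unfolding valid_def
  proof (intro conjI impI)
    show "D \<subseteq> W0" using SW unfolding D_def by blast
    show "dom_by G0 D (W0 - {Inl u})"
      unfolding dom_by_def
    proof
      fix x assume x: "x \<in> W0 - {Inl u}"
      then obtain a where a: "x = Inl a" "a \<in> verts T" "a \<noteq> u'" "a \<noteq> u" using W0_cases by blast
      obtain y where y: "y \<in> Nb" "a \<in> comp y" using c5[OF a(2) a(4) a(3)] by blast
      show "\<exists>s\<in>D. adj G0 x s"
      proof (cases "a = y")
        case True
        then obtain t where "t \<in> S" "t \<noteq> Inl u" "adj G0 (Inl a) t" using S(3) y(1) by blast
        then show ?thesis using a(1) unfolding D_def by blast
      next
        case False
        obtain s where s: "s \<in> S" "adj G0 x s" using S(1) x unfolding valid_def dom_by_def by blast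
        have "s \<noteq> Inl u"
        proof
          assume "s = Inl u"
          then have "adj G0 x (Inl u)" using s(2) by simp
          moreover have "x \<in> Kc y" using a(1) y(2) unfolding Kc_def by simp
          ultimately have "x = Inl y" using Kc_u[OF y(1)] by blast
          then show False using a(1) False by simp
        qed
        then show ?thesis using s unfolding D_def by blast
      qed
    qed
    show "Inl u \<in> D" if "False" using that by simp
    show "dom_by G0 D {Inl u}" if "False" using that by simp
  qed
  have "PD {} \<le> card D" using R0.le[OF vD] unfolding PD_def .
  moreover have "card D = card S - 1" unfolding D_def using uS by simp
  moreover have "1 \<le> PB {}" using rel(7)[of "{}"] by simp
  moreover have "1 \<le> card S" using uS R0.valid_fin[OF S(1)] by (metis One_nat_def Suc_leI card_gt_0_iff empty_iff)
  ultimately show ?thesis using S(2) by linarith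
qed

end


lemma rooted_cong:
  assumes R: "rooted G W r" and h: "\<forall>x\<in>W. \<forall>y\<in>W. adj G x y = adj G' x y"
  shows "rooted G' W r"
proof (rule rooted.intro)
  show "finite W" using rooted.fin[OF R] .
  show "r \<in> W" using rooted.rW[OF R] .
  show "\<forall>x\<in>W. \<exists>y\<in>W. adj G' x y" using rooted.nbr[OF R] h by blast
qed

lemma join_swap: "join_trees T2 T1 v v' u u' = join_trees T1 T2 u u' v v'"
proof -
  have "(verts T2 \<union> verts T1) - {v', u'} = (verts T1 \<union> verts T2) - {u', v'}" by blast
  moreover have "{e \<in> edges T2 \<union> edges T1 \<union> {{v, u}}. v' \<notin> e \<and> u' \<notin> e} =
      {e \<in> edges T1 \<union> edges T2 \<union> {{u, v}}. u' \<notin> e \<and> v' \<notin> e}"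
    by (auto simp: insert_commute)
  ultimately show ?thesis unfolding join_trees_def by simp
qed

locale jn = A: side T1 u u' + B: side T2 v v'
  for T1 :: "'a graph" and u u' :: 'a and T2 :: "'a graph" and v v' :: 'a +
  assumes disj: "verts T1 \<inter> verts T2 = {}"
begin

abbreviation "TT \<equiv> join_trees T1 T2 u u' v v'"

lemma swap: "jn T2 v v' T1 u u'"
  apply (rule jn.intro)
    apply (rule B.side_axioms)
   apply (rule A.side_axioms)
  apply (rule jn_axioms.intro)
  using disj by blast

lemma vV: "v \<notin> verts T1" "v' \<notin> verts T1" using disj B.uV by blast+
lemma uV2: "u \<notin> verts T2" "u' \<notin> verts T2" using disj A.uV by blast+

lemma E1_V: "e \<in> A.E1 \<Longrightarrow> a \<in> e \<Longrightarrow> a \<in> verts T1 \<and> a \<noteq> u'"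
  using A.nb_u'_free[of "A.E1"] by blast
lemma E2_V: "e \<in> B.E1 \<Longrightarrow> a \<in> e \<Longrightarrow> a \<in> verts T2 \<and> a \<noteq> v'"
  using B.nb_u'_free[of "B.E1"] by blast

lemma edgesTT: "edges TT = A.E1 \<union> B.E1 \<union> {{u, v}}"
proof
  show "edges TT \<subseteq> A.E1 \<union> B.E1 \<union> {{u, v}}"
  proof
    fix e assume "e \<in> edges TT"
    then have e: "e \<in> edges T1 \<union> edges T2 \<union> {{u, v}}" "u' \<notin> e" "v' \<notin> e"
      unfolding join_trees_def edges_def by auto
    from e(1) consider "e \<in> edges T1" | "e \<in> edges T2" | "e = {u, v}" by blast
    then show "e \<in> A.E1 \<union> B.E1 \<union> {{u, v}}"
    proof cases
      case 1 then show ?thesis using e(2) unfolding A.E1_def by simp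
    next
      case 2 then show ?thesis using e(3) unfolding B.E1_def by simp
    next
      case 3 then show ?thesis by simp
    qed
  qed
  show "A.E1 \<union> B.E1 \<union> {{u, v}} \<subseteq> edges TT"
  proof
    fix e assume e: "e \<in> A.E1 \<union> B.E1 \<union> {{u, v}}"
    have h: "e \<in> edges T1 \<union> edges T2 \<union> {{u, v}} \<and> u' \<notin> e \<and> v' \<notin> e"
    proof -
      consider "e \<in> A.E1" | "e \<in> B.E1" | "e = {u, v}" using e by blast
      then show ?thesis
      proof cases
        case 1
        have "v' \<notin> e" using E1_V[OF 1] vV(2) by blast
        then show ?thesis using 1 unfolding A.E1_def by simp
      next
        case 2
        have "u' \<notin> e" using E2_V[OF 2] uV2(2) by blast
        then show ?thesis using 2 unfolding B.E1_def by simp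
      next
        case 3
        have "u' \<noteq> u" "u' \<noteq> v" "v' \<noteq> u" "v' \<noteq> v" using A.uV B.uV vV uV2 by auto
        then show ?thesis using 3 by simp
      qed
    qed
    then show "e \<in> edges TT" unfolding join_trees_def edges_def by simp
  qed
qed

lemma vertsTT: "verts TT = (verts T1 - {u'}) \<union> (verts T2 - {v'})"
proof -
  have "verts TT = (verts T1 \<union> verts T2) - {u', v'}" unfolding join_trees_def verts_def by simp
  then show ?thesis using vV(2) uV2(2) by blast
qed

lemma uv_notin: "{u, v} \<notin> A.E1" "{u, v} \<notin> B.E1"
  using E1_V[of "{u, v}" v] E2_V[of "{u, v}" u] vV(1) uV2(1) by auto

lemma E12_disj: "e \<in> A.E1 \<Longrightarrow> e \<notin> B.E1"
proof
  assume e1: "e \<in> A.E1" and e2: "e \<in> B.E1"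
  obtain a b where "e = {a, b}" using A.E1_elem[OF e1] by blast
  then have "a \<in> e" by simp
  then show False using E1_V[OF e1] E2_V[OF e2] disj by blast
qed

lemma adjK_LL: "adj (subdivide TT F) (Inl a) (Inl b) \<longleftrightarrow> {a, b} \<in> edges TT - F"
  by (rule adj_sub_LL)

lemma adjK1:
  assumes F: "F \<subseteq> edges TT" and x: "x \<in> A.WW (F \<inter> A.E1)" and a: "adj (subdivide TT F) x y"
  shows "y \<in> A.WW (F \<inter> A.E1) \<or> (x = Inl u \<and> ((y = Inl v \<and> {u, v} \<notin> F) \<or> (y = Inr {u, v} \<and> {u, v} \<in> F)))"
proof (cases x)
  case (Inl p)
  then have p: "p \<in> verts T1" "p \<noteq> u'" using x by auto
  show ?thesis
  proof (cases y)
    case (Inl q)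
    then have h: "{p, q} \<in> edges TT" "{p, q} \<notin> F" using a \<open>x = Inl p\<close> by (simp_all add: adj_sub)
    from h(1) consider "{p, q} \<in> A.E1" | "{p, q} \<in> B.E1" | "{p, q} = {u, v}" unfolding edgesTT by blast
    then show ?thesis
    proof cases
      case 1
      then have "q \<in> verts T1 \<and> q \<noteq> u'" using E1_V by blast
      then show ?thesis using Inl by simp
    next
      case 2
      then have "p \<in> verts T2" using E2_V by blast
      then show ?thesis using p disj by blast
    next
      case 3
      then have "p = u \<and> q = v \<or> p = v \<and> q = u" by (metis doubleton_eq_iff)
      then have "p = u" "q = v" using p vV by auto
      then show ?thesis using Inl \<open>x = Inl p\<close> h(2) 3 by simp
    qed
  next
    case (Inr e)
    then have h: "e \<in> F" "p \<in> e" using a \<open>x = Inl p\<close> by (simp_all add: adj_sub)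
    then have "e \<in> edges TT" using F by blast
    then consider "e \<in> A.E1" | "e \<in> B.E1" | "e = {u, v}" unfolding edgesTT by blast
    then show ?thesis
    proof cases
      case 1 then show ?thesis using Inr h by simp
    next
      case 2
      then have "p \<in> verts T2" using E2_V h(2) by blast
      then show ?thesis using p disj by blast
    next
      case 3
      then have "p = u" using h(2) p vV by auto
      then show ?thesis using Inr \<open>x = Inl p\<close> h(1) 3 by simp
    qed
  qed
next
  case (Inr e)
  then have e: "e \<in> F" "e \<in> A.E1" using x by auto
  show ?thesis
  proof (cases y)
    case (Inl q)
    then have "q \<in> e" using a \<open>x = Inr e\<close> by (simp add: adj_sub)
    then have "q \<in> verts T1 \<and> q \<noteq> u'" using E1_V[OF e(2)] by blast
    then show ?thesis using Inl by simp
  next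
    case (Inr e')
    then show ?thesis using a \<open>x = Inr e\<close> by (simp add: adj_sub)
  qed
qed

lemma adjK1_eq:
  assumes F: "F \<subseteq> edges TT" and x: "x \<in> A.WW (F \<inter> A.E1)" and y: "y \<in> A.WW (F \<inter> A.E1)"
  shows "adj (subdivide TT F) x y = adj (subdivide T1 (F \<inter> A.E1)) x y"
proof (cases x)
  case (Inl p)
  then have p: "p \<in> verts T1" "p \<noteq> u'" using x by auto
  show ?thesis
  proof (cases y)
    case (Inl q)
    then have q: "q \<in> verts T1" "q \<noteq> u'" using y by auto
    have "{p, q} \<in> edges TT \<longleftrightarrow> {p, q} \<in> A.E1"
    proof
      assume "{p, q} \<in> edges TT"
      then consider "{p, q} \<in> A.E1" | "{p, q} \<in> B.E1" | "{p, q} = {u, v}" unfolding edgesTT by blast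
      then show "{p, q} \<in> A.E1"
      proof cases
        case 1 then show ?thesis .
      next
        case 2 then have "p \<in> verts T2" using E2_V by blast
        then show ?thesis using p disj by blast
      next
        case 3 then have "v \<in> {p, q}" by simp
        then show ?thesis using p q vV by auto
      qed
    next
      assume "{p, q} \<in> A.E1" then show "{p, q} \<in> edges TT" unfolding edgesTT by simp
    qed
    moreover have "{p, q} \<in> edges T1 \<longleftrightarrow> {p, q} \<in> A.E1"
    proof -
      have "u' \<notin> {p, q}" using p(2) q(2) by simp
      then show ?thesis unfolding A.E1_def by simp
    qed
    moreover have "adj (subdivide TT F) x y \<longleftrightarrow> {p, q} \<in> edges TT \<and> {p, q} \<notin> F"
      using Inl \<open>x = Inl p\<close> by (simp add: adj_sub)
    moreover have "adj (subdivide T1 (F \<inter> A.E1)) x y \<longleftrightarrow> {p, q} \<in> edges T1 \<and> {p, q} \<notin> F \<inter> A.E1"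
      using Inl \<open>x = Inl p\<close> by (simp add: adj_sub)
    ultimately show ?thesis by blast
  next
    case (Inr e)
    then have "e \<in> F" "e \<in> A.E1" using y by auto
    then show ?thesis using Inr \<open>x = Inl p\<close> by (simp add: adj_sub)
  qed
next
  case (Inr e)
  then have "e \<in> F" "e \<in> A.E1" using x by auto
  show ?thesis
  proof (cases y)
    case (Inl q)
    then show ?thesis using \<open>x = Inr e\<close> \<open>e \<in> F\<close> \<open>e \<in> A.E1\<close> by (simp add: adj_sub)
  next
    case (Inr e')
    then show ?thesis using \<open>x = Inr e\<close> by (simp add: adj_sub)
  qed
qed

lemma rootedK1: "F \<subseteq> edges TT \<Longrightarrow> rooted (subdivide TT F) (A.WW (F \<inter> A.E1)) (Inl u)"
proof -
  assume F: "F \<subseteq> edges TT"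
  have "F \<inter> A.E1 \<subseteq> A.E1" by blast
  from A.rootedF[OF this] show ?thesis
    by (rule rooted_cong) (use adjK1_eq[OF F] in simp)
qed

lemma parK1: "F \<subseteq> edges TT \<Longrightarrow> par (subdivide TT F) (A.WW (F \<inter> A.E1)) (Inl u) i d = par (subdivide T1 (F \<inter> A.E1)) (A.WW (F \<inter> A.E1)) (Inl u) i d"
proof -
  assume F: "F \<subseteq> edges TT"
  show ?thesis by (rule par_cong) (use adjK1_eq[OF F] A.uV in simp_all)
qed

lemma WW_disj: "A.WW F1 \<inter> B.WW F2 = {}" if "F1 \<subseteq> A.E1" "F2 \<subseteq> B.E1"
proof -
  have "Inl ` (verts T1 - {u'}) \<inter> Inl ` (verts T2 - {v'}) = {}" using disj by blast
  moreover have "F1 \<inter> F2 = {}" using that E12_disj by blast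
  ultimately show ?thesis
  proof -
    assume d1: "Inl ` (verts T1 - {u'}) \<inter> Inl ` (verts T2 - {v'}) = {}" and d2: "F1 \<inter> F2 = {}"
    show ?thesis
    proof (rule ccontr)
      assume "A.WW F1 \<inter> B.WW F2 \<noteq> {}"
      then obtain x where x: "x \<in> A.WW F1" "x \<in> B.WW F2" by blast
      show False
      proof (cases x)
        case (Inl a)
        then have "a \<in> verts T1" "a \<in> verts T2" using x by auto
        then show False using disj by blast
      next
        case (Inr e) then show False using x d2 by auto
      qed
    qed
  qed
qed

lemma vertsK: "F \<subseteq> edges TT \<Longrightarrow> verts (subdivide TT F) = A.WW (F \<inter> A.E1) \<union> B.WW (F \<inter> B.E1) \<union> Inr ` (F \<inter> {{u, v}})"
proof -
  assume F: "F \<subseteq> edges TT"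
  have "F = (F \<inter> A.E1) \<union> (F \<inter> B.E1) \<union> (F \<inter> {{u, v}})" using F unfolding edgesTT by blast
  then have eqR: "Inr ` F = Inr ` (F \<inter> A.E1) \<union> Inr ` (F \<inter> B.E1) \<union> Inr ` (F \<inter> {{u, v}})" by (metis image_Un)
  have eqL: "Inl ` ((verts T1 - {u'}) \<union> (verts T2 - {v'})) = Inl ` (verts T1 - {u'}) \<union> Inl ` (verts T2 - {v'})"
    by (rule image_Un)
  show ?thesis unfolding verts_subdivide vertsTT A.WW_def B.WW_def eqL eqR by blast
qed

end


context side begin

lemma S3': "F \<subseteq> E1 \<Longrightarrow> card F \<le> 1 \<Longrightarrow> PB F \<le> PB {}"
proof -
  assume F: "F \<subseteq> E1" and c: "card F \<le> 1"
  have fin: "finite F" using E1_fin[OF F] .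
  show ?thesis
  proof (cases "card F = 0")
    case True
    then have "F = {}" using fin by simp
    then show ?thesis by simp
  next
    case False
    then have "card F = 1" using c by simp
    then obtain e where e: "F = {e}" by (rule card_1_singletonE)
    then have "e \<in> E1" using F by simp
    then show ?thesis using S3 e by simp
  qed
qed

lemma base_rel: "PA {} = PB {} + 1" "PD {} + 1 = PB {}" "PB {} \<le> PC {}"
proof -
  show a: "PA {} = PB {} + 1" by (rule S1)
  show "PD {} + 1 = PB {}" using S4 rel(2)[of "{}"] by simp
  show "PB {} \<le> PC {}" using rel(3)[of "{}"] a by simp
qed

end

context jn begin

abbreviation "W1 F \<equiv> A.WW (F \<inter> A.E1)"
abbreviation "W2 F \<equiv> B.WW (F \<inter> B.E1)"
abbreviation "KK F \<equiv> subdivide TT F"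

lemma edgesTT2: "edges (join_trees T2 T1 v v' u u') = edges TT" by (simp add: join_swap)

lemma rootedK2: "F \<subseteq> edges TT \<Longrightarrow> rooted (KK F) (W2 F) (Inl v)"
  using jn.rootedK1[OF swap, of F] by (simp add: join_swap)

lemma parK2: "F \<subseteq> edges TT \<Longrightarrow> par (KK F) (W2 F) (Inl v) i d = par (subdivide T2 (F \<inter> B.E1)) (W2 F) (Inl v) i d"
  using jn.parK1[OF swap, of F] by (simp add: join_swap)

lemma adjK2:
  assumes F: "F \<subseteq> edges TT" and x: "x \<in> W2 F" and a: "adj (KK F) x y"
  shows "y \<in> W2 F \<or> (x = Inl v \<and> ((y = Inl u \<and> {u, v} \<notin> F) \<or> (y = Inr {u, v} \<and> {u, v} \<in> F)))"
proof -
  have F': "F \<subseteq> edges (join_trees T2 T1 v v' u u')" using F by (simp add: join_swap)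
  have a': "adj (subdivide (join_trees T2 T1 v v' u u') F) x y" using a by (simp add: join_swap)
  have "{v, u} = {u, v}" by (rule insert_commute)
  then show ?thesis using jn.adjK1[OF swap F' x a'] by simp
qed

lemma adjK_z: "adj (KK F) (Inr {u, v}) y \<longleftrightarrow> {u, v} \<in> F \<and> (y = Inl u \<or> y = Inl v)"
proof (cases y)
  case (Inl b) then show ?thesis by (auto simp: adj_sub)
next
  case (Inr e) then show ?thesis by (simp add: adj_sub)
qed

lemma uvTT: "{u, v} \<in> edges TT" unfolding edgesTT by simp

lemma glue0K:
  assumes F: "F \<subseteq> edges TT" and uv: "{u, v} \<notin> F"
  shows "glue0 (KK F) (W1 F) (Inl u) (W2 F) (Inl v)"
proof (rule glue0.intro)
  show "rooted (KK F) (W1 F) (Inl u)" using rootedK1[OF F] .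
  show "rooted (KK F) (W2 F) (Inl v)" using rootedK2[OF F] .
  show "glue0_axioms (KK F) (W1 F) (Inl u) (W2 F) (Inl v)"
  proof (rule glue0_axioms.intro)
    show "W1 F \<inter> W2 F = {}" by (rule WW_disj) auto
    have "F \<inter> {{u, v}} = {}" using uv by auto
    then show "verts (KK F) = W1 F \<union> W2 F" using vertsK[OF F] by simp
    show "adj (KK F) (Inl u) (Inl v)" using uvTT uv by (simp add: adj_sub)
    show "\<forall>x\<in>W1 F - {Inl u}. \<forall>y. adj (KK F) x y \<longrightarrow> y \<in> W1 F"
      using adjK1[OF F] by blast
    show "\<forall>x\<in>W2 F - {Inl v}. \<forall>y. adj (KK F) x y \<longrightarrow> y \<in> W2 F"
      using adjK2[OF F] by blast
    show "\<forall>y. adj (KK F) (Inl u) y \<longrightarrow> y \<in> W1 F \<or> y = Inl v"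
      using adjK1[OF F, of "Inl u"] A.uV uv by simp
    show "\<forall>y. adj (KK F) (Inl v) y \<longrightarrow> y \<in> W2 F \<or> y = Inl u"
      using adjK2[OF F, of "Inl v"] B.uV uv by simp
  qed
qed

lemma glue1K:
  assumes F: "F \<subseteq> edges TT" and uv: "{u, v} \<in> F"
  shows "glue1 (KK F) (W1 F) (Inl u) (W2 F) (Inl v) (Inr {u, v})"
proof (rule glue1.intro)
  show "rooted (KK F) (W1 F) (Inl u)" using rootedK1[OF F] .
  show "rooted (KK F) (W2 F) (Inl v)" using rootedK2[OF F] .
  show "glue1_axioms (KK F) (W1 F) (Inl u) (W2 F) (Inl v) (Inr {u, v})"
  proof (rule glue1_axioms.intro)
    show "W1 F \<inter> W2 F = {}" by (rule WW_disj) auto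
    show "Inr {u, v} \<notin> W1 F" using uv_notin by simp
    show "Inr {u, v} \<notin> W2 F" using uv_notin by simp
    have "F \<inter> {{u, v}} = {{u, v}}" using uv by auto
    then show "verts (KK F) = insert (Inr {u, v}) (W1 F \<union> W2 F)" using vertsK[OF F] by auto
    show "\<forall>y. adj (KK F) (Inr {u, v}) y = (y = Inl u \<or> y = Inl v)" using adjK_z uv by simp
    show "\<forall>x\<in>W1 F - {Inl u}. \<forall>y. adj (KK F) x y \<longrightarrow> y \<in> W1 F"
      using adjK1[OF F] by blast
    show "\<forall>x\<in>W2 F - {Inl v}. \<forall>y. adj (KK F) x y \<longrightarrow> y \<in> W2 F"
      using adjK2[OF F] by blast
    show "\<forall>y. adj (KK F) (Inl u) y \<longrightarrow> y \<in> W1 F \<or> y = Inr {u, v}"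
      using adjK1[OF F, of "Inl u"] A.uV uv by simp
    show "\<forall>y. adj (KK F) (Inl v) y \<longrightarrow> y \<in> W2 F \<or> y = Inr {u, v}"
      using adjK2[OF F, of "Inl v"] B.uV uv by simp
  qed
qed

end


context jn begin

lemma p1:
  assumes F: "F \<subseteq> edges TT"
  shows "par (KK F) (W1 F) (Inl u) True True = A.PA (F \<inter> A.E1)"
    "par (KK F) (W1 F) (Inl u) True False = A.PB (F \<inter> A.E1)"
    "par (KK F) (W1 F) (Inl u) False True = A.PC (F \<inter> A.E1)"
    "par (KK F) (W1 F) (Inl u) False False = A.PD (F \<inter> A.E1)"
  unfolding A.PA_def A.PB_def A.PC_def A.PD_def using parK1[OF F] by simp_all

lemma p2:
  assumes F: "F \<subseteq> edges TT"
  shows "par (KK F) (W2 F) (Inl v) True True = B.PA (F \<inter> B.E1)"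
    "par (KK F) (W2 F) (Inl v) True False = B.PB (F \<inter> B.E1)"
    "par (KK F) (W2 F) (Inl v) False True = B.PC (F \<inter> B.E1)"
    "par (KK F) (W2 F) (Inl v) False False = B.PD (F \<inter> B.E1)"
  unfolding B.PA_def B.PB_def B.PC_def B.PD_def using parK2[OF F] by simp_all

lemma gammaTT: "gamma_t TT = A.PB {} + B.PB {}"
proof -
  have F: "{} \<subseteq> edges TT" by simp
  interpret g: glue0 "KK {}" "W1 {}" "Inl u" "W2 {}" "Inl v" using glue0K[OF F] by simp
  obtain S1 where S1: "valid (KK {}) (W1 {}) (Inl u) True False S1" "card S1 = g.R1.pB" using g.R1.wit by blast
  obtain S2 where S2: "valid (KK {}) (W2 {}) (Inl v) True False S2" "card S2 = g.R2.pB" using g.R2.wit by blast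
  have t: "total_dominating (KK {}) (S1 \<union> S2)" using g.upper[OF S1(1) S2(1)] by simp
  have "gamma_t (KK {}) \<le> card (S1 \<union> S2)" using gamma_le[OF g.finV t] .
  also have "\<dots> \<le> card S1 + card S2" by (rule card_Un_le)
  finally have up: "gamma_t (KK {}) \<le> A.PB {} + B.PB {}" using S1(2) S2(2) p1(2)[OF F] p2(2)[OF F] by simp
  obtain S where S: "total_dominating (KK {}) S" "card S = gamma_t (KK {})" using gamma_ex[OF g.finV t] by blast
  have lo: "A.PB {} + B.PB {} \<le> card S"
    using g.lower[OF S(1)] p1[OF F] p2[OF F] A.base_rel B.base_rel A.rel(3)[of "{}"] B.rel(3)[of "{}"] by auto
  have "gamma_t TT = gamma_t (KK {})" by (rule gamma_sub_empty[symmetric])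
  then show ?thesis using up lo S(2) by simp
qed

end


context jn begin

lemma finTT: "finite (edges TT)"
proof -
  have "finite A.E1" using A.E1_fin by blast
  moreover have "finite B.E1" using B.E1_fin by blast
  ultimately show ?thesis unfolding edgesTT by simp
qed

lemma cards:
  assumes F: "F \<subseteq> edges TT"
  shows "card (F \<inter> A.E1) + card (F \<inter> B.E1) \<le> card F"
    "{u, v} \<in> F \<Longrightarrow> card (F \<inter> A.E1) + card (F \<inter> B.E1) + 1 \<le> card F"
proof -
  have fF: "finite F" using F finTT finite_subset by blast
  have d: "(F \<inter> A.E1) \<inter> (F \<inter> B.E1) = {}" using E12_disj by blast
  have f12: "finite (F \<inter> A.E1)" "finite (F \<inter> B.E1)" using fF by simp_all
  have c12: "card ((F \<inter> A.E1) \<union> (F \<inter> B.E1)) = card (F \<inter> A.E1) + card (F \<inter> B.E1)"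
    using card_Un_disjoint[OF f12 d] .
  have "card ((F \<inter> A.E1) \<union> (F \<inter> B.E1)) \<le> card F" using fF by (intro card_mono) auto
  then show "card (F \<inter> A.E1) + card (F \<inter> B.E1) \<le> card F" using c12 by simp
  assume uv: "{u, v} \<in> F"
  have nin: "{u, v} \<notin> (F \<inter> A.E1) \<union> (F \<inter> B.E1)" using uv_notin by blast
  have "card (insert {u, v} ((F \<inter> A.E1) \<union> (F \<inter> B.E1))) \<le> card F"
    using fF uv by (intro card_mono) auto
  then show "card (F \<inter> A.E1) + card (F \<inter> B.E1) + 1 \<le> card F" using c12 nin f12 by simp
qed

lemma fin0: "finite X \<Longrightarrow> card X = 0 \<Longrightarrow> X = {}" by simp

lemma goal1:
  assumes F: "F \<subseteq> edges TT" and c: "card F \<le> 2"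
  shows "gamma_t (KK F) \<le> A.PB {} + B.PB {}"
proof -
  have fF: "finite F" using F finTT finite_subset by blast
  have F1: "F \<inter> A.E1 \<subseteq> A.E1" and F2: "F \<inter> B.E1 \<subseteq> B.E1" by auto
  have f12: "finite (F \<inter> A.E1)" "finite (F \<inter> B.E1)" using fF by simp_all
  show ?thesis
  proof (cases "{u, v} \<in> F")
    case False
    interpret g: glue0 "KK F" "W1 F" "Inl u" "W2 F" "Inl v" using glue0K[OF F False] .
    consider "card (F \<inter> A.E1) \<le> 1" "card (F \<inter> B.E1) \<le> 1" | "2 \<le> card (F \<inter> A.E1)" | "2 \<le> card (F \<inter> B.E1)"
      by linarith
    then show ?thesis
    proof cases
      case 1
      obtain S1 where S1: "valid (KK F) (W1 F) (Inl u) True False S1" "card S1 = g.R1.pB" using g.R1.wit by blast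
      obtain S2 where S2: "valid (KK F) (W2 F) (Inl v) True False S2" "card S2 = g.R2.pB" using g.R2.wit by blast
      have t: "total_dominating (KK F) (S1 \<union> S2)" using g.upper[OF S1(1) S2(1)] by simp
      have "gamma_t (KK F) \<le> card (S1 \<union> S2)" using gamma_le[OF g.finV t] .
      also have "\<dots> \<le> card S1 + card S2" by (rule card_Un_le)
      also have "\<dots> = A.PB (F \<inter> A.E1) + B.PB (F \<inter> B.E1)" using S1(2) S2(2) p1(2)[OF F] p2(2)[OF F] by simp
      also have "\<dots> \<le> A.PB {} + B.PB {}" using A.S3'[OF F1 1(1)] B.S3'[OF F2 1(2)] by simp
      finally show ?thesis .
    next
      case 2
      then have "card (F \<inter> B.E1) = 0" using cards(1)[OF F] c by simp
      then have e2: "F \<inter> B.E1 = {}" using f12(2) by simp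
      have c1: "card (F \<inter> A.E1) \<le> 2" using cards(1)[OF F] c by simp
      obtain S1 where S1: "valid (KK F) (W1 F) (Inl u) True True S1" "card S1 = g.R1.pA" using g.R1.wit by blast
      obtain S2 where S2: "valid (KK F) (W2 F) (Inl v) False False S2" "card S2 = g.R2.pD" using g.R2.wit by blast
      have t: "total_dominating (KK F) (S1 \<union> S2)" using g.upper[OF S1(1) S2(1)] by simp
      have "gamma_t (KK F) \<le> card (S1 \<union> S2)" using gamma_le[OF g.finV t] .
      also have "\<dots> \<le> card S1 + card S2" by (rule card_Un_le)
      also have "\<dots> = A.PA (F \<inter> A.E1) + B.PD {}" using S1(2) S2(2) p1(1)[OF F] p2(4)[OF F] e2 by simp
      also have "\<dots> \<le> A.PB {} + B.PB {}" using A.S2[OF F1 c1] A.base_rel B.base_rel by simp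
      finally show ?thesis .
    next
      case 3
      then have "card (F \<inter> A.E1) = 0" using cards(1)[OF F] c by simp
      then have e1: "F \<inter> A.E1 = {}" using f12(1) by simp
      have c2: "card (F \<inter> B.E1) \<le> 2" using cards(1)[OF F] c by simp
      interpret g': glue0 "KK F" "W2 F" "Inl v" "W1 F" "Inl u" using g.swap .
      obtain S2 where S2: "valid (KK F) (W2 F) (Inl v) True True S2" "card S2 = g.R2.pA" using g.R2.wit by blast
      obtain S1 where S1: "valid (KK F) (W1 F) (Inl u) False False S1" "card S1 = g.R1.pD" using g.R1.wit by blast
      have t: "total_dominating (KK F) (S2 \<union> S1)" using g'.upper[OF S2(1) S1(1)] by simp
      have "gamma_t (KK F) \<le> card (S2 \<union> S1)" using gamma_le[OF g.finV t] .
      also have "\<dots> \<le> card S2 + card S1" by (rule card_Un_le)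
      also have "\<dots> = B.PA (F \<inter> B.E1) + A.PD {}" using S1(2) S2(2) p2(1)[OF F] p1(4)[OF F] e1 by simp
      also have "\<dots> \<le> A.PB {} + B.PB {}" using B.S2[OF F2 c2] A.base_rel B.base_rel by simp
      finally show ?thesis .
    qed
  next
    case True
    interpret g: glue1 "KK F" "W1 F" "Inl u" "W2 F" "Inl v" "Inr {u, v}" using glue1K[OF F True] .
    have c12: "card (F \<inter> A.E1) + card (F \<inter> B.E1) \<le> 1" using cards(2)[OF F True] c by simp
    show ?thesis
    proof (cases "card (F \<inter> B.E1) = 0")
      case True
      then have e2: "F \<inter> B.E1 = {}" using f12(2) by simp
      have c1: "card (F \<inter> A.E1) \<le> 1" using c12 by simp
      obtain S1 where S1: "valid (KK F) (W1 F) (Inl u) True False S1" "card S1 = g.R1.pB" using g.R1.wit by blast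
      obtain S2 where S2: "valid (KK F) (W2 F) (Inl v) False False S2" "card S2 = g.R2.pD" using g.R2.wit by blast
      have t: "total_dominating (KK F) (insert (Inr {u, v}) (S1 \<union> S2))" using g.upper[OF S1(1) S2(1)] .
      have "gamma_t (KK F) \<le> card (insert (Inr {u, v}) (S1 \<union> S2))" using gamma_le[OF g.finV t] .
      also have "\<dots> \<le> card S1 + card S2 + 1" by (rule g.card_upper[OF S1(1) S2(1)])
      also have "\<dots> = A.PB (F \<inter> A.E1) + B.PD {} + 1" using S1(2) S2(2) p1(2)[OF F] p2(4)[OF F] e2 by simp
      also have "\<dots> \<le> A.PB {} + B.PB {}" using A.S3'[OF F1 c1] B.base_rel by simp
      finally show ?thesis .
    next
      case False
      then have "card (F \<inter> A.E1) = 0" using c12 by simp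
      then have e1: "F \<inter> A.E1 = {}" using f12(1) by simp
      have c2: "card (F \<inter> B.E1) \<le> 1" using c12 by simp
      interpret g': glue1 "KK F" "W2 F" "Inl v" "W1 F" "Inl u" "Inr {u, v}" using g.swap .
      obtain S2 where S2: "valid (KK F) (W2 F) (Inl v) True False S2" "card S2 = g.R2.pB" using g.R2.wit by blast
      obtain S1 where S1: "valid (KK F) (W1 F) (Inl u) False False S1" "card S1 = g.R1.pD" using g.R1.wit by blast
      have t: "total_dominating (KK F) (insert (Inr {u, v}) (S2 \<union> S1))" using g'.upper[OF S2(1) S1(1)] .
      have "gamma_t (KK F) \<le> card (insert (Inr {u, v}) (S2 \<union> S1))" using gamma_le[OF g.finV t] .
      also have "\<dots> \<le> card S2 + card S1 + 1" by (rule g'.card_upper[OF S2(1) S1(1)])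
      also have "\<dots> = B.PB (F \<inter> B.E1) + A.PD {} + 1" using S1(2) S2(2) p2(2)[OF F] p1(4)[OF F] e1 by simp
      also have "\<dots> \<le> A.PB {} + B.PB {}" using B.S3'[OF F2 c2] A.base_rel by simp
      finally show ?thesis .
    qed
  qed
qed

end


context jn begin

lemma goal2: "\<exists>F. F \<subseteq> edges TT \<and> card F = 3 \<and> A.PB {} + B.PB {} < gamma_t (KK F)"
proof -
  from A.S5 show ?thesis
  proof
    assume "\<exists>F. F \<subseteq> A.E1 \<and> card F = 3 \<and> A.PB {} + 2 \<le> A.PA F"
    then obtain F where F1: "F \<subseteq> A.E1" and cF: "card F = 3" and big: "A.PB {} + 2 \<le> A.PA F" by blast
    have F: "F \<subseteq> edges TT" using F1 unfolding edgesTT by blast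
    have i1: "F \<inter> A.E1 = F" using F1 by blast
    have i2: "F \<inter> B.E1 = {}" using F1 E12_disj by blast
    have uv: "{u, v} \<notin> F" using F1 uv_notin by blast
    interpret g: glue0 "KK F" "W1 F" "Inl u" "W2 F" "Inl v" using glue0K[OF F uv] .
    have t: "total_dominating (KK F) (W1 F \<union> W2 F)" using g.upper[OF g.R1.W_valid[of True True] g.R2.W_valid[of False False]] by simp
    obtain S where S: "total_dominating (KK F) S" "card S = gamma_t (KK F)" using gamma_ex[OF g.finV t] by blast
    have r: "A.PA F \<le> A.PB F + 1" "A.PB F \<le> A.PD F + 1" "A.PA F \<le> A.PC F + 1" using A.rel[OF F1] by simp_all
    have "A.PB {} + B.PB {} < card S"
      using g.lower[OF S(1)] p1[OF F] p2[OF F] i1 i2 r big B.base_rel by auto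
    then show ?thesis using F cF S(2) by auto
  next
    assume "\<exists>F. F \<subseteq> A.E1 \<and> card F = 2 \<and> A.PB {} + 1 \<le> A.PB F"
    then obtain F' where F1: "F' \<subseteq> A.E1" and cF: "card F' = 2" and big: "A.PB {} + 1 \<le> A.PB F'" by blast
    define F where "F = insert {u, v} F'"
    have F: "F \<subseteq> edges TT" using F1 unfolding edgesTT F_def by blast
    have nin: "{u, v} \<notin> F'" using F1 uv_notin by blast
    have fF': "finite F'" using A.E1_fin[OF F1] .
    have cF3: "card F = 3" unfolding F_def using nin fF' cF by simp
    have i1: "F \<inter> A.E1 = F'" using F1 uv_notin unfolding F_def by blast
    have i2: "F \<inter> B.E1 = {}" using F1 E12_disj uv_notin unfolding F_def by blast
    have uv: "{u, v} \<in> F" unfolding F_def by simp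
    interpret g: glue1 "KK F" "W1 F" "Inl u" "W2 F" "Inl v" "Inr {u, v}" using glue1K[OF F uv] .
    have t: "total_dominating (KK F) (insert (Inr {u, v}) (W1 F \<union> W2 F))"
      using g.upper[OF g.R1.W_valid g.R2.W_valid] .
    obtain S where S: "total_dominating (KK F) S" "card S = gamma_t (KK F)" using gamma_ex[OF g.finV t] by blast
    have r: "A.PB F' \<le> A.PA F'" "A.PB F' \<le> A.PD F' + 1" "A.PD F' \<le> A.PC F'" using A.rel[OF F1] by simp_all
    have "A.PB {} + B.PB {} < card S"
      using g.lower[OF S(1)] p1[OF F] p2[OF F] i1 i2 r big B.base_rel by auto
    then show ?thesis using F cF3 S(2) by auto
  qed
qed

lemma class3TT: "class3 TT"
  unfolding class3_def
proof
  obtain F where F: "F \<subseteq> edges TT" "card F = 3" "A.PB {} + B.PB {} < gamma_t (KK F)" using goal2 by blast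
  have inc: "increases_gamma_t TT F" unfolding increases_gamma_t_def using F gammaTT by simp
  then show "\<exists>F. increases_gamma_t TT F" by blast
  show "sd_gamma_t TT = 3"
    unfolding sd_gamma_t_def
  proof (rule Least_equality)
    show "\<exists>F. increases_gamma_t TT F \<and> card F = 3" using inc F(2) by blast
    fix k assume "\<exists>F. increases_gamma_t TT F \<and> card F = k"
    then obtain F' where F': "increases_gamma_t TT F'" "card F' = k" by blast
    show "3 \<le> k"
    proof (rule ccontr)
      assume "\<not> 3 \<le> k"
      then have "card F' \<le> 2" using F'(2) by simp
      moreover have "F' \<subseteq> edges TT" using F'(1) unfolding increases_gamma_t_def by simp
      ultimately have "gamma_t (KK F') \<le> gamma_t TT" using goal1 gammaTT by simp
      then show False using F'(1) unfolding increases_gamma_t_def by simp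
    qed
  qed
qed

end

theorem mainTheorem9:
  fixes T1 T2 :: "'a graph" and u u' v v' :: 'a
  assumes "is_tree T1" and "is_tree T2"
    and "verts T1 \<inter> verts T2 = {}"
    and "weak_support T1 u" and "is_leaf T1 u'" and "adj T1 u u'"
    and "weak_support T2 v" and "is_leaf T2 v'" and "adj T2 v v'"
    and "class3 T1" and "class3 T2"
  shows "class3 (join_trees T1 T2 u u' v v')"
proof -
  have s1: "side T1 u u'" using assms by (intro side.intro)
  have s2: "side T2 v v'" using assms by (intro side.intro)
  interpret jn T1 u u' T2 v v'
    by (rule jn.intro[OF s1 s2]) (rule jn_axioms.intro, rule assms(3))
  show ?thesis by (rule class3TT)
qed


end
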